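(* For every real $x\ge6$, $$\sum_{n>x}\frac{1}{n\,\varphi(n)}<\frac{2.1}{x}.$$
   Context: $\varphi$ is Euler's totient function; the sum is over integers $n>x$. *)

theory Defs
  imports "HOL-Analysis.Analysis" "HOL-Number_Theory.Number_Theory"
begin

end

theory Submission
  imports Defs
begin


definition w :: "nat set \<Rightarrow> real" where
  "w S = (\<Prod>p\<in>S. 1 / (real p - 1))"

lemma w_nonneg: "(\<And>p. p \<in> S \<Longrightarrow> prime p) \<Longrightarrow> w S \<ge> 0"
  unfolding w_def
  by (intro prod_nonneg) (auto simp: prime_ge_Suc_0_nat)

lemma ratio_expand:
  assumes "n > 0"
  shows "real n / real (totient n) = (\<Sum>S\<in>Pow (prime_factors n). w S)"
proof -
  have pf: "\<And>p. p \<in> prime_factors n \<Longrightarrow> real p > 1"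
    by (auto simp: prime_factors_multiplicity prime_gt_Suc_0_nat)
  have "real (totient n) = real n * (\<Prod>p\<in>prime_factors n. 1 - 1 / real p)"
    by (rule totient_formula2)
  hence "real n / real (totient n) = inverse (\<Prod>p\<in>prime_factors n. 1 - 1 / real p)"
    using assms by (simp add: field_simps)
  also have "\<dots> = (\<Prod>p\<in>prime_factors n. inverse (1 - 1 / real p))"
    using prod_inversef[of "\<lambda>p. 1 - 1 / real p" "prime_factors n"] by (simp add: o_def)
  also have "\<dots> = (\<Prod>p\<in>prime_factors n. 1 / (real p - 1) + 1)"
  proof (intro prod.cong refl)
    fix p assume "p \<in> prime_factors n"
    with pf have "real p > 1" by auto
    thus "inverse (1 - 1 / real p) = 1 / (real p - 1) + 1"
      by (simp add: field_simps)
  qed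
  also have "\<dots> = (\<Sum>S\<in>Pow (prime_factors n). w S)"
    by (subst prod_add) (auto simp: w_def)
  finally show ?thesis .
qed

lemma prod_subset_prime_factors_dvd:
  fixes n :: nat
  assumes "n > 0" "S \<subseteq> prime_factors n"
  shows "\<Prod>S dvd n"
proof -
  have "\<Prod>S dvd (\<Prod>p\<in>prime_factors n. p)"
    using assms by (intro prod_dvd_prod_subset) auto
  also have "(\<Prod>p\<in>prime_factors n. p) dvd (\<Prod>p\<in>prime_factors n. p ^ multiplicity p n)"
    by (intro prod_dvd_prod) (auto simp: prime_factors_multiplicity dvd_power)
  also have "\<dots> = n" using assms(1) by (simp add: prod_prime_factors)
  finally show ?thesis .
qed

lemma primeset_facts:
  fixes S :: "nat set"
  assumes "finite S" "\<And>p. p \<in> S \<Longrightarrow> prime p"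
  shows "\<Prod>S > 0" "prime_factors (\<Prod>S) = S"
        "real (totient (\<Prod>S)) = (\<Prod>p\<in>S. real p - 1)"
proof -
  show pos: "\<Prod>S > 0" using assms by (auto intro!: prod_pos simp: prime_gt_0_nat)
  have "prime_factors (\<Prod>S) = (\<Union>p\<in>S. prime_factors p)"
    using assms by (subst prime_factors_prod) (auto simp: o_def, metis not_prime_0)
  also have "\<dots> = S" using assms by (auto simp: prime_prime_factors)
  finally show pf: "prime_factors (\<Prod>S) = S" .
  have "real (totient (\<Prod>S)) = real (\<Prod>S) * (\<Prod>p\<in>S. 1 - 1 / real p)"
    using totient_formula2[of "\<Prod>S"] pf by simp
  also have "\<dots> = (\<Prod>p\<in>S. real p * (1 - 1 / real p))"
    by (simp add: prod.distrib)
  also have "\<dots> = (\<Prod>p\<in>S. real p - 1)"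
    using assms by (intro prod.cong refl) (auto simp: field_simps prime_gt_0_nat)
  finally show "real (totient (\<Prod>S)) = (\<Prod>p\<in>S. real p - 1)" .
qed

lemma swap_lemma:
  fixes g :: "nat \<Rightarrow> real"
  assumes F: "finite F" "\<And>n. n \<in> F \<Longrightarrow> n > 0" and Q: "finite Q"
      "\<And>n. n \<in> F \<Longrightarrow> prime_factors n \<subseteq> Q"
  shows "(\<Sum>n\<in>F. g n * (real n / real (totient n))) =
         (\<Sum>S\<in>Pow Q. w S * (\<Sum>n\<in>{n\<in>F. S \<subseteq> prime_factors n}. g n))"
proof -
  have "(\<Sum>n\<in>F. g n * (real n / real (totient n))) =
        (\<Sum>n\<in>F. \<Sum>S\<in>Pow Q. if S \<subseteq> prime_factors n then g n * w S else 0)"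
  proof (intro sum.cong refl)
    fix n assume n: "n \<in> F"
    have "g n * (real n / real (totient n)) = (\<Sum>S\<in>Pow (prime_factors n). g n * w S)"
      using F(2)[OF n] by (simp add: ratio_expand sum_distrib_left)
    also have "\<dots> = (\<Sum>S\<in>Pow Q. if S \<subseteq> prime_factors n then g n * w S else 0)"
      using Q(1) Q(2)[OF n] by (subst sum.If_cases) (auto intro!: sum.cong simp: Int_def)
    finally show "g n * (real n / real (totient n)) = \<dots>" .
  qed
  also have "\<dots> = (\<Sum>S\<in>Pow Q. \<Sum>n\<in>F. if S \<subseteq> prime_factors n then g n * w S else 0)"
    by (rule sum.swap)
  also have "\<dots> = (\<Sum>S\<in>Pow Q. w S * (\<Sum>n\<in>{n\<in>F. S \<subseteq> prime_factors n}. g n))"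
    using F(1) by (intro sum.cong refl) (simp add: sum.inter_filter[symmetric] sum_distrib_left mult.commute)
  finally show ?thesis .
qed


lemma dvd_reindex:
  fixes g :: "nat \<Rightarrow> real"
  assumes "d > 0" "finite F"
  shows "(\<Sum>n\<in>{n\<in>F. d dvd n}. g n) = (\<Sum>m\<in>{m. d * m \<in> F}. g (d * m))"
proof -
  have "{n\<in>F. d dvd n} = (\<lambda>m. d * m) ` {m. d * m \<in> F}" by auto
  moreover have "inj_on (\<lambda>m. d * m) {m. d * m \<in> F}" using assms(1) by (auto simp: inj_on_def)
  ultimately show ?thesis by (simp add: sum.reindex)
qed

lemma finite_mult_preimage:
  assumes "d > 0" "finite (F::nat set)"
  shows "finite {m. d * m \<in> F}"
proof -
  have "{m. d * m \<in> F} \<subseteq> {..Max F}"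
  proof
    fix m assume "m \<in> {m. d * m \<in> F}"
    hence "d * m \<le> Max F" using assms(2) by simp
    moreover have "m \<le> d * m" using assms(1) by simp
    ultimately have "m \<le> Max F" by (meson le_trans)
    thus "m \<in> {..Max F}" by simp
  qed
  thus ?thesis by (rule finite_subset) auto
qed

lemma sq_tail_aux:
  assumes "1 \<le> k" "k \<le> K"
  shows "(\<Sum>m=k..K. 1 / real m ^ 2) \<le> 1 / real k ^ 2 + 1 / real k - 1 / real K"
  using assms(2)
proof (induction K rule: dec_induct)
  case base thus ?case by simp
next
  case (step K)
  have K: "real K \<ge> 1" using assms step by simp
  have kK: "k \<le> Suc K" using step by simp
  have "(\<Sum>m=k..Suc K. 1 / real m ^ 2) = (\<Sum>m=k..K. 1 / real m ^ 2) + 1 / real (Suc K) ^ 2"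
    using kK by (simp add: sum.cl_ivl_Suc)
  moreover have "1 / real (Suc K) ^ 2 \<le> 1 / real K - 1 / real (Suc K)"
  proof -
    have e: "1 / real K - 1 / real (Suc K) = 1 / (real K * (real K + 1))" using K by (simp add: field_simps)
    have "1 / (real K + 1) ^ 2 \<le> 1 / (real K * (real K + 1))"
      using K by (intro divide_left_mono mult_mono) (auto simp: power2_eq_square)
    thus ?thesis using e by (simp add: add.commute)
  qed
  ultimately show ?case using step.IH by linarith
qed

lemma sq_tail:
  assumes "y > 0" "finite M" "\<And>m. m \<in> M \<Longrightarrow> real m > y"
  shows "(\<Sum>m\<in>M. 1 / real m ^ 2) \<le> 1 / y + 1 / y ^ 2 \<and> (\<Sum>m\<in>M. 1 / real m ^ 2) \<le> 2"
proof (cases "M = {}")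
  case True thus ?thesis using assms by simp
next
  case False
  define k where "k = nat \<lfloor>y\<rfloor> + 1"
  define K where "K = Max M"
  have fl0: "\<lfloor>y\<rfloor> \<ge> 0" using assms(1) by simp
  have rk: "real k = real_of_int \<lfloor>y\<rfloor> + 1" unfolding k_def using fl0 by simp
  have ky: "real k > y" unfolding rk by (rule real_of_int_floor_add_one_gt)
  have k1: "k \<ge> 1" unfolding k_def by simp
  have sub: "M \<subseteq> {k..K}"
  proof
    fix m assume m: "m \<in> M"
    have "real m > y" using assms(3)[OF m] .
    hence "real_of_int \<lfloor>y\<rfloor> < real_of_int (int m)" using of_int_floor_le[of y] by linarith
    hence "\<lfloor>y\<rfloor> < int m" by (simp only: of_int_less_iff)
    hence "nat \<lfloor>y\<rfloor> < m" using fl0 by (simp add: nat_less_iff)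
    hence "m \<ge> k" unfolding k_def by simp
    moreover have "m \<le> K" unfolding K_def using assms(2) m by simp
    ultimately show "m \<in> {k..K}" by simp
  qed
  have kK: "k \<le> K" using sub False by auto
  have "(\<Sum>m\<in>M. 1 / real m ^ 2) \<le> (\<Sum>m=k..K. 1 / real m ^ 2)"
    by (rule sum_mono2[OF _ sub]) auto
  also have "\<dots> \<le> 1 / real k ^ 2 + 1 / real k - 1 / real K"
    by (rule sq_tail_aux[OF k1 kK])
  also have "\<dots> \<le> 1 / real k ^ 2 + 1 / real k"
    by simp
  finally have main: "(\<Sum>m\<in>M. 1 / real m ^ 2) \<le> 1 / real k ^ 2 + 1 / real k" .
  have a: "1 / real k \<le> 1 / y" using ky assms(1) by (simp add: frac_le)
  have b: "1 / real k ^ 2 \<le> 1 / y ^ 2" using ky assms(1)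
    by (intro divide_left_mono power_mono) auto
  have c: "1 / real k \<le> 1" using k1 by simp
  have d: "1 / real k ^ 2 \<le> 1" using k1 by simp
  show ?thesis using main a b c d by linarith
qed

lemma harm_bound:
  assumes "finite M" "M \<subseteq> {1..K}"
  shows "(\<Sum>m\<in>M. 1 / real m) \<le> harm K"
proof -
  have "(\<Sum>m\<in>M. 1 / real m) \<le> (\<Sum>m\<in>{1..K}. 1 / real m)"
    by (rule sum_mono2[OF _ assms(2)]) auto
  thus ?thesis by (simp add: harm_def divide_inverse)
qed


definition f :: "nat \<Rightarrow> real" where
  "f n = 1 / (real n * real (totient n))"

definition Qs :: "nat \<Rightarrow> nat set" where
  "Qs N = {p. prime p \<and> p \<le> N}"

lemma finite_Qs [simp]: "finite (Qs N)"
  unfolding Qs_def by (rule finite_subset[of _ "{..N}"]) auto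

lemma Pow_Qs_prime: "S \<in> Pow (Qs N) \<Longrightarrow> p \<in> S \<Longrightarrow> prime p"
  unfolding Qs_def by auto

lemma Pow_Qs_finite: "S \<in> Pow (Qs N) \<Longrightarrow> finite S"
  using finite_Qs[of N] by (auto intro: finite_subset)

lemma f_nonneg: "f n \<ge> 0" unfolding f_def by simp

lemma per_S:
  assumes x: "x > 0" and F: "finite F" "F \<subseteq> {n. real n > x}"
      and S: "finite S" "\<And>p. p \<in> S \<Longrightarrow> prime p"
  shows "w S * (\<Sum>n\<in>{n\<in>F. S \<subseteq> prime_factors n}. 1 / real n ^ 2)
         \<le> w S / real (\<Prod>S) / x + (if real (\<Prod>S) \<le> x then w S / x ^ 2 else w S / real (\<Prod>S) / x)"
proof -
  define d where "d = \<Prod>S"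
  have d0: "d > 0" unfolding d_def using primeset_facts(1)[OF S] .
  hence rd: "real d > 0" by simp
  define M where "M = {m. d * m \<in> F}"
  have Mfin: "finite M" unfolding M_def by (rule finite_mult_preimage[OF d0 F(1)])
  have "(\<Sum>n\<in>{n\<in>F. S \<subseteq> prime_factors n}. 1 / real n ^ 2) \<le> (\<Sum>n\<in>{n\<in>F. d dvd n}. 1 / real n ^ 2)"
  proof (rule sum_mono2)
    show "finite {n \<in> F. d dvd n}" using F(1) by simp
    show "{n \<in> F. S \<subseteq> prime_factors n} \<subseteq> {n \<in> F. d dvd n}"
    proof
      fix n assume n: "n \<in> {n \<in> F. S \<subseteq> prime_factors n}"
      hence "real n > x" using F(2) by auto
      hence "n > 0" using x by (cases n) auto
      thus "n \<in> {n \<in> F. d dvd n}" using n prod_subset_prime_factors_dvd unfolding d_def by auto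
    qed
  qed auto
  also have "\<dots> = (\<Sum>m\<in>M. 1 / real (d * m) ^ 2)"
    unfolding M_def by (rule dvd_reindex[OF d0 F(1)])
  also have "\<dots> = (1 / real d ^ 2) * (\<Sum>m\<in>M. 1 / real m ^ 2)"
    by (simp add: sum_distrib_left power_mult_distrib)
  finally have A: "(\<Sum>n\<in>{n\<in>F. S \<subseteq> prime_factors n}. 1 / real n ^ 2) \<le> (1 / real d ^ 2) * (\<Sum>m\<in>M. 1 / real m ^ 2)" .
  have Mgt: "real m > x / real d" if "m \<in> M" for m
  proof -
    have "real (d * m) > x" using that F(2) unfolding M_def by auto
    thus ?thesis using rd by (simp add: field_simps)
  qed
  have T: "(\<Sum>m\<in>M. 1 / real m ^ 2) \<le> 1 / (x / real d) + 1 / (x / real d) ^ 2 \<and> (\<Sum>m\<in>M. 1 / real m ^ 2) \<le> 2"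
    by (rule sq_tail) (use x rd Mfin Mgt in auto)
  have wS: "w S \<ge> 0" by (rule w_nonneg) (use S in auto)
  have B: "(\<Sum>n\<in>{n\<in>F. S \<subseteq> prime_factors n}. 1 / real n ^ 2) \<le>
           (if real d \<le> x then 1 / (real d * x) + 1 / x ^ 2 else 2 / (real d * x))"
  proof (cases "real d \<le> x")
    case True
    have "(1 / real d ^ 2) * (\<Sum>m\<in>M. 1 / real m ^ 2) \<le> (1 / real d ^ 2) * (1 / (x / real d) + 1 / (x / real d) ^ 2)"
      using T by (intro mult_left_mono) auto
    also have "\<dots> = 1 / (real d * x) + 1 / x ^ 2" using rd x by (simp add: field_simps power2_eq_square)
    finally show ?thesis using A True by simp
  next
    case False
    have "(1 / real d ^ 2) * (\<Sum>m\<in>M. 1 / real m ^ 2) \<le> (1 / real d ^ 2) * 2"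
      using T by (intro mult_left_mono) auto
    also have "\<dots> \<le> 2 / (real d * x)"
    proof -
      have "real d * x \<le> real d ^ 2" using False rd by (simp add: power2_eq_square)
      thus ?thesis using rd x by (simp add: field_simps power2_eq_square)
    qed
    finally show ?thesis using A False by simp
  qed
  have "w S * (\<Sum>n\<in>{n\<in>F. S \<subseteq> prime_factors n}. 1 / real n ^ 2) \<le>
        w S * (if real d \<le> x then 1 / (real d * x) + 1 / x ^ 2 else 2 / (real d * x))"
    using B wS by (rule mult_left_mono)
  also have "\<dots> = w S / real d / x + (if real d \<le> x then w S / x ^ 2 else w S / real d / x)"
    using rd x by (auto simp: field_simps)
  finally show ?thesis unfolding d_def .
qed


definition T1 :: "nat \<Rightarrow> real" where
  "T1 N = (\<Sum>S\<in>Pow (Qs N). w S / real (\<Prod>S))"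
definition T2 :: "nat \<Rightarrow> real \<Rightarrow> real" where
  "T2 N x = (\<Sum>S\<in>Pow (Qs N) \<inter> {S. real (\<Prod>S) \<le> x}. w S)"
definition T3 :: "nat \<Rightarrow> real \<Rightarrow> real" where
  "T3 N x = (\<Sum>S\<in>Pow (Qs N) \<inter> - {S. real (\<Prod>S) \<le> x}. w S / real (\<Prod>S))"

lemma f_alt: "n > 0 \<Longrightarrow> f n = 1 / real n ^ 2 * (real n / real (totient n))"
  unfolding f_def by (simp add: field_simps power2_eq_square)

lemma pf_Qs: "n > 0 \<Longrightarrow> n \<le> N \<Longrightarrow> prime_factors n \<subseteq> Qs N"
  unfolding Qs_def by (auto simp: prime_factors_dvd intro: order.trans[OF dvd_imp_le])

lemma MB:
  assumes x: "x > 0" and F: "finite F" "F \<subseteq> {n. real n > x}" and N: "\<And>n. n \<in> F \<Longrightarrow> n \<le> N"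
  shows "sum f F \<le> T1 N / x + T2 N x / x ^ 2 + T3 N x / x"
proof -
  have pos: "n > 0" if "n \<in> F" for n
  proof -
    have "real n > x" using that F(2) by auto
    thus ?thesis using x by (cases n) auto
  qed
  have "sum f F = (\<Sum>n\<in>F. 1 / real n ^ 2 * (real n / real (totient n)))"
    by (intro sum.cong refl f_alt pos)
  also have "\<dots> = (\<Sum>S\<in>Pow (Qs N). w S * (\<Sum>n\<in>{n\<in>F. S \<subseteq> prime_factors n}. 1 / real n ^ 2))"
    by (rule swap_lemma) (use F pos N pf_Qs in auto)
  also have "\<dots> \<le> (\<Sum>S\<in>Pow (Qs N). w S / real (\<Prod>S) / x + (if real (\<Prod>S) \<le> x then w S / x ^ 2 else w S / real (\<Prod>S) / x))"
    by (intro sum_mono per_S[OF x F]) (auto intro: Pow_Qs_finite Pow_Qs_prime)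
  also have "\<dots> = T1 N / x + T2 N x / x ^ 2 + T3 N x / x"
    unfolding T1_def T2_def T3_def
    by (simp add: sum.distrib sum.If_cases sum_divide_distrib)
  finally show ?thesis .
qed

lemma T1_prod: "T1 N = (\<Prod>p\<in>Qs N. 1 + 1 / (real p * (real p - 1)))"
proof -
  have "T1 N = (\<Sum>S\<in>Pow (Qs N). (\<Prod>p\<in>S. 1 / (real p * (real p - 1))) * (\<Prod>p\<in>Qs N - S. 1))"
    unfolding T1_def
  proof (intro sum.cong refl)
    fix S assume "S \<in> Pow (Qs N)"
    have "w S / real (\<Prod>S) = (\<Prod>p\<in>S. 1 / (real p - 1)) / (\<Prod>p\<in>S. real p)"
      unfolding w_def by (simp add: of_nat_prod)
    also have "\<dots> = (\<Prod>p\<in>S. 1 / (real p - 1) / real p)"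
      by (rule prod_dividef[symmetric])
    also have "\<dots> = (\<Prod>p\<in>S. 1 / (real p * (real p - 1)))"
      by (intro prod.cong refl) (simp add: field_simps)
    finally show "w S / real (\<Prod>S) = (\<Prod>p\<in>S. 1 / (real p * (real p - 1))) * (\<Prod>p\<in>Qs N - S. 1)" by simp
  qed
  also have "\<dots> = (\<Prod>p\<in>Qs N. 1 / (real p * (real p - 1)) + 1)"
    by (rule prod_add[symmetric]) simp
  finally show ?thesis by (simp add: add.commute)
qed

lemma T1_nonneg_terms: "S \<subseteq> Qs N \<Longrightarrow> w S / real (\<Prod>S) \<ge> 0"
  by (intro divide_nonneg_nonneg w_nonneg) (auto simp: Qs_def intro!: prod_nonneg)

lemma T3_le_T1: "T3 N x \<le> T1 N"
proof -
  have h: "\<And>S. S \<subseteq> Qs N \<Longrightarrow> 0 \<le> w S / prod real S" using T1_nonneg_terms by simp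
  show ?thesis unfolding T3_def T1_def by (rule sum_mono2) (auto simp: h)
qed

lemma f_prod: "S \<in> Pow (Qs N) \<Longrightarrow> f (\<Prod>S) = w S / real (\<Prod>S)"
proof -
  assume S: "S \<in> Pow (Qs N)"
  have fin: "finite S" and pr: "\<And>p. p \<in> S \<Longrightarrow> prime p" using S by (auto intro: Pow_Qs_finite Pow_Qs_prime)
  have "f (\<Prod>S) = 1 / (real (\<Prod>S) * (\<Prod>p\<in>S. real p - 1))"
    unfolding f_def using primeset_facts(3)[OF fin pr] by simp
  also have "\<dots> = w S / real (\<Prod>S)"
  proof -
    have "w S = 1 / (\<Prod>p\<in>S. real p - 1)" unfolding w_def
      using prod_dividef[of "\<lambda>_. 1" "\<lambda>p. real p - 1" S] by simp
    thus ?thesis by (simp add: divide_divide_eq_left mult.commute)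
  qed
  finally show ?thesis .
qed

lemma inj_Prod: "inj_on Prod (Pow (Qs N))"
proof
  fix S S' assume "S \<in> Pow (Qs N)" "S' \<in> Pow (Qs N)" "\<Prod>S = \<Prod>S'"
  thus "S = S'" using primeset_facts(2)[of S] primeset_facts(2)[of S']
    by (metis Pow_Qs_finite Pow_Qs_prime)
qed

lemma T3_as_f: "T3 N x = sum f (Prod ` (Pow (Qs N) \<inter> - {S. real (\<Prod>S) \<le> x}))"
proof -
  have "sum f (Prod ` (Pow (Qs N) \<inter> - {S. real (\<Prod>S) \<le> x})) = (\<Sum>S\<in>Pow (Qs N) \<inter> - {S. real (\<Prod>S) \<le> x}. f (\<Prod>S))"
    using sum.reindex[OF inj_on_subset[OF inj_Prod[of N]], of "Pow (Qs N) \<inter> - {S. real (\<Prod>S) \<le> x}" f]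
    by (simp add: o_def)
  also have "\<dots> = T3 N x" unfolding T3_def by (intro sum.cong refl f_prod) auto
  finally show ?thesis by simp
qed

lemma T3_image_sub: "Prod ` (Pow (Qs N) \<inter> - {S. real (\<Prod>S) \<le> x}) \<subseteq> {n. real n > x}"
  by auto


lemma w_totient: "S \<in> Pow (Qs N) \<Longrightarrow> w S = 1 / real (totient (\<Prod>S))"
proof -
  assume S: "S \<in> Pow (Qs N)"
  have fin: "finite S" and pr: "\<And>p. p \<in> S \<Longrightarrow> prime p" using S by (auto intro: Pow_Qs_finite Pow_Qs_prime)
  have "w S = 1 / (\<Prod>p\<in>S. real p - 1)" unfolding w_def
    using prod_dividef[of "\<lambda>_. 1" "\<lambda>p. real p - 1" S] by simp
  thus ?thesis using primeset_facts(3)[OF fin pr] by simp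
qed

lemma T2_le:
  assumes "x > 0"
  shows "T2 N x \<le> (\<Sum>n\<in>{1..nat \<lfloor>x\<rfloor>}. 1 / real (totient n))"
proof -
  let ?A = "Pow (Qs N) \<inter> {S. real (\<Prod>S) \<le> x}"
  have "T2 N x = (\<Sum>S\<in>?A. 1 / real (totient (\<Prod>S)))"
    unfolding T2_def by (intro sum.cong refl w_totient) auto
  also have "\<dots> = (\<Sum>n\<in>Prod ` ?A. 1 / real (totient n))"
    using sum.reindex[OF inj_on_subset[OF inj_Prod[of N]], of ?A "\<lambda>n. 1 / real (totient n)"]
    by (simp add: o_def)
  also have "\<dots> \<le> (\<Sum>n\<in>{1..nat \<lfloor>x\<rfloor>}. 1 / real (totient n))"
  proof (rule sum_mono2)
    show "Prod ` ?A \<subseteq> {1..nat \<lfloor>x\<rfloor>}"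
    proof
      fix n assume "n \<in> Prod ` ?A"
      then obtain S where S: "S \<in> ?A" "n = \<Prod>S" by auto
      have "S \<in> Pow (Qs N)" using S by auto
      hence "finite S" "\<And>p. p \<in> S \<Longrightarrow> prime p" by (auto intro: Pow_Qs_finite Pow_Qs_prime)
      hence "n > 0" using S(2) primeset_facts(1)[of S] by simp
      moreover have "n \<le> nat \<lfloor>x\<rfloor>" using S by (auto intro: le_nat_floor)
      ultimately show "n \<in> {1..nat \<lfloor>x\<rfloor>}" by simp
    qed
  qed auto
  finally show ?thesis .
qed

lemma W_bound: "(\<Sum>n\<in>{1..K}. 1 / real (totient n)) \<le> T1 K * harm K"
proof -
  have "(\<Sum>n\<in>{1..K}. 1 / real (totient n)) = (\<Sum>n\<in>{1..K}. 1 / real n * (real n / real (totient n)))"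
    by (intro sum.cong refl) (auto simp: field_simps)
  also have "\<dots> = (\<Sum>S\<in>Pow (Qs K). w S * (\<Sum>n\<in>{n\<in>{1..K}. S \<subseteq> prime_factors n}. 1 / real n))"
    by (rule swap_lemma) (use pf_Qs in auto)
  also have "\<dots> \<le> (\<Sum>S\<in>Pow (Qs K). w S * (1 / real (\<Prod>S) * harm K))"
  proof (intro sum_mono mult_left_mono)
    fix S assume S: "S \<in> Pow (Qs K)"
    have fin: "finite S" and pr: "\<And>p. p \<in> S \<Longrightarrow> prime p" using S by (auto intro: Pow_Qs_finite Pow_Qs_prime)
    show "w S \<ge> 0" using w_nonneg pr by blast
    define d where "d = \<Prod>S"
    have d0: "d > 0" unfolding d_def using primeset_facts(1)[OF fin pr] .
    define M where "M = {m. d * m \<in> {1..K}}"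
    have "(\<Sum>n\<in>{n\<in>{1..K}. S \<subseteq> prime_factors n}. 1 / real n) \<le> (\<Sum>n\<in>{n\<in>{1..K}. d dvd n}. 1 / real n)"
      by (rule sum_mono2) (auto simp: d_def intro: prod_subset_prime_factors_dvd)
    also have "\<dots> = (\<Sum>m\<in>M. 1 / real (d * m))"
      unfolding M_def by (rule dvd_reindex[OF d0]) simp
    also have "\<dots> = 1 / real d * (\<Sum>m\<in>M. 1 / real m)"
      by (simp add: sum_distrib_left)
    also have "\<dots> \<le> 1 / real d * harm K"
    proof (intro mult_left_mono harm_bound)
      show "finite M" unfolding M_def by (rule finite_mult_preimage[OF d0]) simp
      show "M \<subseteq> {1..K}"
      proof
        fix m assume "m \<in> M"
        hence m: "d * m \<ge> 1" "d * m \<le> K" unfolding M_def by auto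
        have "m \<ge> 1" using m(1) by (cases m) auto
        moreover have mm: "m \<le> d * m" using d0 by simp
        have "m \<le> K" by (rule le_trans[OF mm m(2)])
        ultimately show "m \<in> {1..K}" by simp
      qed
    qed simp
    finally show "(\<Sum>n\<in>{n\<in>{1..K}. S \<subseteq> prime_factors n}. 1 / real n) \<le> 1 / real (\<Prod>S) * harm K"
      unfolding d_def .
  qed
  also have "\<dots> = T1 K * harm K"
    unfolding T1_def by (simp add: sum_distrib_right)
  finally show ?thesis .
qed



definition wheel :: "nat \<Rightarrow> bool" where
  "wheel n \<longleftrightarrow> n = 2 \<or> n = 3 \<or> (n \<ge> 5 \<and> (n mod 6 = 1 \<or> n mod 6 = 5))"

lemma prime_wheel:
  assumes p: "prime (p::nat)"
  shows "wheel p"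
proof -
  have p2: "p \<ge> 2" using prime_ge_2_nat[OF p] .
  have d: "m dvd p \<Longrightarrow> m = 1 \<or> m = p" for m using p by (auto simp: prime_nat_iff)
  have m2: "p mod 6 mod 2 = p mod 2" by (rule mod_mod_cancel) simp
  have m3: "p mod 6 mod 3 = p mod 3" by (rule mod_mod_cancel) simp
  have "p mod 6 < 6" by simp
  then consider "p mod 6 = 0 \<or> p mod 6 = 2 \<or> p mod 6 = 4" | "p mod 6 = 3" | "p mod 6 = 1 \<or> p mod 6 = 5"
    by linarith
  thus ?thesis
  proof cases
    case 1
    hence "p mod 2 = 0" using m2 by auto
    hence "2 dvd p" by presburger
    hence "p = 2" using d[of 2] by simp
    thus ?thesis unfolding wheel_def by simp
  next
    case 2
    hence "p mod 3 = 0" using m3 by auto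
    hence "3 dvd p" by presburger
    hence "p = 3" using d[of 3] by simp
    thus ?thesis unfolding wheel_def by simp
  next
    case 3
    have "p \<noteq> 2" "p \<noteq> 3" "p \<noteq> 4" using 3 by auto
    hence "p \<ge> 5" using p2 by linarith
    thus ?thesis using 3 unfolding wheel_def by simp
  qed
qed

fun pw :: "nat \<Rightarrow> real" where
  "pw 0 = 1"
| "pw (Suc n) = pw n * (if wheel (Suc n) then 1 + 1 / (real (Suc n) * real n) else 1)"

lemma pw_factor_ge1: "(if wheel (Suc n) then 1 + 1 / (real (Suc n) * real n) else 1) \<ge> (1::real)"
  by auto

lemma pw_pos: "pw n \<ge> 1"
proof (induction n)
  case (Suc n)
  have "1 * 1 \<le> pw n * (if wheel (Suc n) then 1 + 1 / (real (Suc n) * real n) else 1)"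
    using Suc pw_factor_ge1[of n] by (intro mult_mono) auto
  thus ?case by simp
qed simp

lemma pw_mono_Suc: "pw n \<le> pw (Suc n)"
proof -
  have "pw n * 1 \<le> pw n * (if wheel (Suc n) then 1 + 1 / (real (Suc n) * real n) else 1)"
    using pw_pos[of n] pw_factor_ge1[of n] by (intro mult_left_mono) auto
  thus ?thesis by simp
qed

lemma pw_mono: "m \<le> n \<Longrightarrow> pw m \<le> pw n"
proof (induction n rule: dec_induct)
  case (step n)
  show ?case by (rule order.trans[OF step.IH pw_mono_Suc])
qed simp

lemma Qs_Suc: "Qs (Suc N) = (if prime (Suc N) then insert (Suc N) (Qs N) else Qs N)"
  unfolding Qs_def by (auto simp: le_Suc_eq)

lemma prod_Qs_le_pw: "(\<Prod>p\<in>Qs N. 1 + 1 / (real p * (real p - 1))) \<le> pw N"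
proof (induction N)
  case 0
  have "Qs 0 = {}" unfolding Qs_def by (auto dest: prime_gt_0_nat)
  thus ?case by simp
next
  case (Suc N)
  have fac: "(1::real) \<le> 1 + 1 / (real (Suc N) * (real (Suc N) - 1))" by simp
  show ?case
  proof (cases "prime (Suc N)")
    case True
    have nin: "Suc N \<notin> Qs N" unfolding Qs_def by auto
    have "(\<Prod>p\<in>Qs (Suc N). 1 + 1 / (real p * (real p - 1))) =
          (1 + 1 / (real (Suc N) * (real (Suc N) - 1))) * (\<Prod>p\<in>Qs N. 1 + 1 / (real p * (real p - 1)))"
      using True nin by (simp add: Qs_Suc)
    also have "\<dots> \<le> (1 + 1 / (real (Suc N) * (real (Suc N) - 1))) * pw N"
      using Suc.IH fac by (intro mult_left_mono) auto
    also have "\<dots> = pw (Suc N)" using prime_wheel[OF True] by simp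
    finally show ?thesis .
  next
    case False
    hence "(\<Prod>p\<in>Qs (Suc N). 1 + 1 / (real p * (real p - 1))) = (\<Prod>p\<in>Qs N. 1 + 1 / (real p * (real p - 1)))"
      by (simp add: Qs_Suc)
    also have "\<dots> \<le> pw N" by (rule Suc.IH)
    also have "\<dots> \<le> pw (Suc N)" by (rule pw_mono_Suc)
    finally show ?thesis .
  qed
qed

lemma pw_tail_alg:
  fixes N :: real
  assumes "N \<ge> 2"
  shows "((N - 1) / N) * (1 + 1 / ((N + 1) * N)) \<le> N / (N + 1)"
proof -
  have p: "N > 0" "N + 1 > 0" "(N+1)*N > 0" using assms by auto
  have a: "1 + 1 / ((N + 1) * N) = ((N + 1) * N + 1) / ((N + 1) * N)"
    using p by (simp add: field_simps)
  have dd: "N * ((N + 1) * N) = (N + 1) * (N * N)" by (simp add: algebra_simps)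
  have b: "((N - 1) / N) * (((N + 1) * N + 1) / ((N + 1) * N)) = ((N - 1) * ((N + 1) * N + 1)) / ((N + 1) * (N * N))"
    unfolding times_divide_times_eq dd ..
  have c: "N / (N + 1) = (N * (N * N)) / ((N + 1) * (N * N))"
    using p by simp
  have "(N - 1) * ((N + 1) * N + 1) \<le> N * (N * N)" by (simp add: algebra_simps)
  hence "((N - 1) * ((N + 1) * N + 1)) / ((N + 1) * (N * N)) \<le> (N * (N * N)) / ((N + 1) * (N * N))"
    using p by (intro divide_right_mono) auto
  thus ?thesis unfolding a b c .
qed

lemma pw_tail:
  assumes "2 \<le> P0" "P0 \<le> N"
  shows "pw N \<le> pw P0 * (real P0 / (real P0 - 1)) * ((real N - 1) / real N)"
  using assms(2)
proof (induction N rule: dec_induct)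
  case base
  have "real P0 \<ge> 2" using assms by simp
  thus ?case by (simp add: field_simps)
next
  case (step N)
  have N2: "real N \<ge> 2" using assms step by simp
  define C where "C = pw P0 * (real P0 / (real P0 - 1))"
  have C0: "C \<ge> 0" unfolding C_def using pw_pos[of P0] assms by (intro mult_nonneg_nonneg) auto
  have eq: "pw (Suc N) = pw N * (if wheel (Suc N) then 1 + 1 / (real (Suc N) * real N) else 1)"
    by (simp only: pw.simps)
  have fac: "(if wheel (Suc N) then 1 + 1 / (real (Suc N) * real N) else 1) \<le> 1 + 1 / ((real N + 1) * real N)"
    by (simp add: add.commute)
  have "pw (Suc N) \<le> pw N * (1 + 1 / ((real N + 1) * real N))"
    unfolding eq by (rule mult_left_mono[OF fac]) (use pw_pos[of N] in simp)
  also have "\<dots> \<le> (C * ((real N - 1) / real N)) * (1 + 1 / ((real N + 1) * real N))"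
    using step.IH unfolding C_def by (intro mult_right_mono) auto
  also have "\<dots> = C * (((real N - 1) / real N) * (1 + 1 / ((real N + 1) * real N)))"
    by (simp only: mult.assoc)
  also have "\<dots> \<le> C * (real N / (real N + 1))"
    by (rule mult_left_mono[OF pw_tail_alg[OF N2] C0])
  also have "\<dots> = C * ((real (Suc N) - 1) / real (Suc N))"
    by simp
  finally show ?case unfolding C_def .
qed

lemma pw_chain:
  assumes "pw n \<le> a" "a * (if wheel (Suc n) then 1 + 1 / (real (Suc n) * real n) else 1) \<le> b"
  shows "pw (Suc n) \<le> b"
proof -
  have eq: "pw (Suc n) = pw n * (if wheel (Suc n) then 1 + 1 / (real (Suc n) * real n) else 1)"
    by (simp only: pw.simps)
  have "pw (Suc n) \<le> a * (if wheel (Suc n) then 1 + 1 / (real (Suc n) * real n) else 1)"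
    unfolding eq by (rule mult_right_mono[OF assms(1)]) (rule order.trans[OF _ pw_factor_ge1], simp)
  thus ?thesis using assms(2) by linarith
qed



lemma pw_step':
  assumes "n = Suc m" "pw m \<le> a" "a * (if wheel n then 1 + 1 / (real n * real m) else 1) \<le> b"
  shows "pw n \<le> b"
proof -
  from assms(3) have "a * (if wheel (Suc m) then 1 + 1 / (real (Suc m) * real m) else 1) \<le> b"
    unfolding assms(1) .
  thus ?thesis unfolding assms(1) by (rule pw_chain[OF assms(2)])
qed




lemma harm_step':
  assumes "n = Suc m" "harm m \<le> (a::real)" "a + 1 / real n \<le> b"
  shows "harm n \<le> b"
  using assms by (simp add: harm_Suc divide_inverse)

lemma tail_step:
  assumes "n = Suc k" "n \<le> 128" "sum f {n<..128} \<le> a" "f n + a \<le> b"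
  shows "sum f {k<..(128::nat)} \<le> b"
proof -
  have "{k<..(128::nat)} = insert n {n<..128}" using assms(1,2) by auto
  hence "sum f {k<..128} = f n + sum f {n<..128}" by simp
  thus ?thesis using assms(3,4) by linarith
qed

definition Pfin :: "nat \<Rightarrow> bool" where
  "Pfin k \<longleftrightarrow> sum f {k<..128} + 0.01618 \<le> 2.1 / (real k + 1)"

lemma down_step:
  assumes "\<forall>k. Suc j \<le> k \<and> k \<le> 127 \<longrightarrow> Pfin k" "Pfin j"
  shows "\<forall>k. j \<le> k \<and> k \<le> 127 \<longrightarrow> Pfin k"
  using assms by (metis Suc_leI le_neq_implies_less)

lemma pw_0b: "pw 0 \<le> 1" by simp
lemma pw_1b: "pw 1 \<le> 1.000000000" by (rule pw_step'[OF _ pw_0b]) (simp_all add: wheel_def)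
lemma pw_2b: "pw 2 \<le> 1.500000000" by (rule pw_step'[OF _ pw_1b]) (simp_all add: wheel_def)
lemma pw_3b: "pw 3 \<le> 1.750000000" by (rule pw_step'[OF _ pw_2b]) (simp_all add: wheel_def)
lemma pw_4b: "pw 4 \<le> 1.750000000" by (rule pw_step'[OF _ pw_3b]) (simp_all add: wheel_def)
lemma pw_5b: "pw 5 \<le> 1.837500000" by (rule pw_step'[OF _ pw_4b]) (simp_all add: wheel_def)
lemma pw_6b: "pw 6 \<le> 1.837500000" by (rule pw_step'[OF _ pw_5b]) (simp_all add: wheel_def)
lemma pw_7b: "pw 7 \<le> 1.881250000" by (rule pw_step'[OF _ pw_6b]) (simp_all add: wheel_def)
lemma pw_8b: "pw 8 \<le> 1.881250000" by (rule pw_step'[OF _ pw_7b]) (simp_all add: wheel_def)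
lemma pw_9b: "pw 9 \<le> 1.881250000" by (rule pw_step'[OF _ pw_8b]) (simp_all add: wheel_def)
lemma pw_10b: "pw 10 \<le> 1.881250000" by (rule pw_step'[OF _ pw_9b]) (simp_all add: wheel_def)
lemma pw_11b: "pw 11 \<le> 1.898352273" by (rule pw_step'[OF _ pw_10b]) (simp_all add: wheel_def)
lemma pw_12b: "pw 12 \<le> 1.898352273" by (rule pw_step'[OF _ pw_11b]) (simp_all add: wheel_def)
lemma pw_13b: "pw 13 \<le> 1.910521198" by (rule pw_step'[OF _ pw_12b]) (simp_all add: wheel_def)
lemma pw_14b: "pw 14 \<le> 1.910521198" by (rule pw_step'[OF _ pw_13b]) (simp_all add: wheel_def)
lemma pw_15b: "pw 15 \<le> 1.910521198" by (rule pw_step'[OF _ pw_14b]) (simp_all add: wheel_def)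
lemma pw_16b: "pw 16 \<le> 1.910521198" by (rule pw_step'[OF _ pw_15b]) (simp_all add: wheel_def)
lemma pw_17b: "pw 17 \<le> 1.917545173" by (rule pw_step'[OF _ pw_16b]) (simp_all add: wheel_def)
lemma pw_18b: "pw 18 \<le> 1.917545173" by (rule pw_step'[OF _ pw_17b]) (simp_all add: wheel_def)
lemma pw_19b: "pw 19 \<le> 1.923152031" by (rule pw_step'[OF _ pw_18b]) (simp_all add: wheel_def)
lemma pw_20b: "pw 20 \<le> 1.923152031" by (rule pw_step'[OF _ pw_19b]) (simp_all add: wheel_def)
lemma pw_21b: "pw 21 \<le> 1.923152031" by (rule pw_step'[OF _ pw_20b]) (simp_all add: wheel_def)
lemma pw_22b: "pw 22 \<le> 1.923152031" by (rule pw_step'[OF _ pw_21b]) (simp_all add: wheel_def)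
lemma pw_23b: "pw 23 \<le> 1.926952727" by (rule pw_step'[OF _ pw_22b]) (simp_all add: wheel_def)
lemma pw_24b: "pw 24 \<le> 1.926952727" by (rule pw_step'[OF _ pw_23b]) (simp_all add: wheel_def)
lemma pw_25b: "pw 25 \<le> 1.930164315" by (rule pw_step'[OF _ pw_24b]) (simp_all add: wheel_def)
lemma pw_26b: "pw 26 \<le> 1.930164315" by (rule pw_step'[OF _ pw_25b]) (simp_all add: wheel_def)
lemma pw_27b: "pw 27 \<le> 1.930164315" by (rule pw_step'[OF _ pw_26b]) (simp_all add: wheel_def)
lemma pw_28b: "pw 28 \<le> 1.930164315" by (rule pw_step'[OF _ pw_27b]) (simp_all add: wheel_def)
lemma pw_29b: "pw 29 \<le> 1.932541365" by (rule pw_step'[OF _ pw_28b]) (simp_all add: wheel_def)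
lemma pw_30b: "pw 30 \<le> 1.932541365" by (rule pw_step'[OF _ pw_29b]) (simp_all add: wheel_def)
lemma pw_31b: "pw 31 \<le> 1.934619367" by (rule pw_step'[OF _ pw_30b]) (simp_all add: wheel_def)
lemma pw_32b: "pw 32 \<le> 1.934619367" by (rule pw_step'[OF _ pw_31b]) (simp_all add: wheel_def)
lemma pw_33b: "pw 33 \<le> 1.934619367" by (rule pw_step'[OF _ pw_32b]) (simp_all add: wheel_def)
lemma pw_34b: "pw 34 \<le> 1.934619367" by (rule pw_step'[OF _ pw_33b]) (simp_all add: wheel_def)
lemma pw_35b: "pw 35 \<le> 1.936245098" by (rule pw_step'[OF _ pw_34b]) (simp_all add: wheel_def)
lemma pw_36b: "pw 36 \<le> 1.936245098" by (rule pw_step'[OF _ pw_35b]) (simp_all add: wheel_def)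
lemma pw_37b: "pw 37 \<le> 1.937698736" by (rule pw_step'[OF _ pw_36b]) (simp_all add: wheel_def)
lemma pw_38b: "pw 38 \<le> 1.937698736" by (rule pw_step'[OF _ pw_37b]) (simp_all add: wheel_def)
lemma pw_39b: "pw 39 \<le> 1.937698736" by (rule pw_step'[OF _ pw_38b]) (simp_all add: wheel_def)
lemma pw_40b: "pw 40 \<le> 1.937698736" by (rule pw_step'[OF _ pw_39b]) (simp_all add: wheel_def)
lemma pw_41b: "pw 41 \<le> 1.938880260" by (rule pw_step'[OF _ pw_40b]) (simp_all add: wheel_def)
lemma pw_42b: "pw 42 \<le> 1.938880260" by (rule pw_step'[OF _ pw_41b]) (simp_all add: wheel_def)
lemma pw_43b: "pw 43 \<le> 1.939953838" by (rule pw_step'[OF _ pw_42b]) (simp_all add: wheel_def)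
lemma pw_44b: "pw 44 \<le> 1.939953838" by (rule pw_step'[OF _ pw_43b]) (simp_all add: wheel_def)
lemma pw_45b: "pw 45 \<le> 1.939953838" by (rule pw_step'[OF _ pw_44b]) (simp_all add: wheel_def)
lemma pw_46b: "pw 46 \<le> 1.939953838" by (rule pw_step'[OF _ pw_45b]) (simp_all add: wheel_def)
lemma pw_47b: "pw 47 \<le> 1.940851134" by (rule pw_step'[OF _ pw_46b]) (simp_all add: wheel_def)
lemma pw_48b: "pw 48 \<le> 1.940851134" by (rule pw_step'[OF _ pw_47b]) (simp_all add: wheel_def)
lemma pw_49b: "pw 49 \<le> 1.941676326" by (rule pw_step'[OF _ pw_48b]) (simp_all add: wheel_def)
lemma pw_50b: "pw 50 \<le> 1.941676326" by (rule pw_step'[OF _ pw_49b]) (simp_all add: wheel_def)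
lemma pw_51b: "pw 51 \<le> 1.941676326" by (rule pw_step'[OF _ pw_50b]) (simp_all add: wheel_def)
lemma pw_52b: "pw 52 \<le> 1.941676326" by (rule pw_step'[OF _ pw_51b]) (simp_all add: wheel_def)
lemma pw_53b: "pw 53 \<le> 1.942380853" by (rule pw_step'[OF _ pw_52b]) (simp_all add: wheel_def)
lemma pw_54b: "pw 54 \<le> 1.942380853" by (rule pw_step'[OF _ pw_53b]) (simp_all add: wheel_def)
lemma pw_55b: "pw 55 \<le> 1.943034854" by (rule pw_step'[OF _ pw_54b]) (simp_all add: wheel_def)
lemma pw_56b: "pw 56 \<le> 1.943034854" by (rule pw_step'[OF _ pw_55b]) (simp_all add: wheel_def)
lemma pw_57b: "pw 57 \<le> 1.943034854" by (rule pw_step'[OF _ pw_56b]) (simp_all add: wheel_def)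
lemma pw_58b: "pw 58 \<le> 1.943034854" by (rule pw_step'[OF _ pw_57b]) (simp_all add: wheel_def)
lemma pw_59b: "pw 59 \<le> 1.943602661" by (rule pw_step'[OF _ pw_58b]) (simp_all add: wheel_def)
lemma pw_60b: "pw 60 \<le> 1.943602661" by (rule pw_step'[OF _ pw_59b]) (simp_all add: wheel_def)
lemma pw_61b: "pw 61 \<le> 1.944133700" by (rule pw_step'[OF _ pw_60b]) (simp_all add: wheel_def)
lemma pw_62b: "pw 62 \<le> 1.944133700" by (rule pw_step'[OF _ pw_61b]) (simp_all add: wheel_def)
lemma pw_63b: "pw 63 \<le> 1.944133700" by (rule pw_step'[OF _ pw_62b]) (simp_all add: wheel_def)
lemma pw_64b: "pw 64 \<le> 1.944133700" by (rule pw_step'[OF _ pw_63b]) (simp_all add: wheel_def)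
lemma pw_65b: "pw 65 \<le> 1.944601040" by (rule pw_step'[OF _ pw_64b]) (simp_all add: wheel_def)
lemma pw_66b: "pw 66 \<le> 1.944601040" by (rule pw_step'[OF _ pw_65b]) (simp_all add: wheel_def)
lemma pw_67b: "pw 67 \<le> 1.945040797" by (rule pw_step'[OF _ pw_66b]) (simp_all add: wheel_def)
lemma pw_68b: "pw 68 \<le> 1.945040797" by (rule pw_step'[OF _ pw_67b]) (simp_all add: wheel_def)
lemma pw_69b: "pw 69 \<le> 1.945040797" by (rule pw_step'[OF _ pw_68b]) (simp_all add: wheel_def)
lemma pw_70b: "pw 70 \<le> 1.945040797" by (rule pw_step'[OF _ pw_69b]) (simp_all add: wheel_def)
lemma pw_71b: "pw 71 \<le> 1.945432154" by (rule pw_step'[OF _ pw_70b]) (simp_all add: wheel_def)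
lemma pw_72b: "pw 72 \<le> 1.945432154" by (rule pw_step'[OF _ pw_71b]) (simp_all add: wheel_def)
lemma pw_73b: "pw 73 \<le> 1.945802290" by (rule pw_step'[OF _ pw_72b]) (simp_all add: wheel_def)
lemma pw_74b: "pw 74 \<le> 1.945802290" by (rule pw_step'[OF _ pw_73b]) (simp_all add: wheel_def)
lemma pw_75b: "pw 75 \<le> 1.945802290" by (rule pw_step'[OF _ pw_74b]) (simp_all add: wheel_def)
lemma pw_76b: "pw 76 \<le> 1.945802290" by (rule pw_step'[OF _ pw_75b]) (simp_all add: wheel_def)
lemma pw_77b: "pw 77 \<le> 1.946134793" by (rule pw_step'[OF _ pw_76b]) (simp_all add: wheel_def)
lemma pw_78b: "pw 78 \<le> 1.946134793" by (rule pw_step'[OF _ pw_77b]) (simp_all add: wheel_def)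
lemma pw_79b: "pw 79 \<le> 1.946450622" by (rule pw_step'[OF _ pw_78b]) (simp_all add: wheel_def)
lemma pw_80b: "pw 80 \<le> 1.946450622" by (rule pw_step'[OF _ pw_79b]) (simp_all add: wheel_def)
lemma pw_81b: "pw 81 \<le> 1.946450622" by (rule pw_step'[OF _ pw_80b]) (simp_all add: wheel_def)
lemma pw_82b: "pw 82 \<le> 1.946450622" by (rule pw_step'[OF _ pw_81b]) (simp_all add: wheel_def)
lemma pw_83b: "pw 83 \<le> 1.946736613" by (rule pw_step'[OF _ pw_82b]) (simp_all add: wheel_def)
lemma pw_84b: "pw 84 \<le> 1.946736613" by (rule pw_step'[OF _ pw_83b]) (simp_all add: wheel_def)
lemma pw_85b: "pw 85 \<le> 1.947009266" by (rule pw_step'[OF _ pw_84b]) (simp_all add: wheel_def)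
lemma pw_86b: "pw 86 \<le> 1.947009266" by (rule pw_step'[OF _ pw_85b]) (simp_all add: wheel_def)
lemma pw_87b: "pw 87 \<le> 1.947009266" by (rule pw_step'[OF _ pw_86b]) (simp_all add: wheel_def)
lemma pw_88b: "pw 88 \<le> 1.947009266" by (rule pw_step'[OF _ pw_87b]) (simp_all add: wheel_def)
lemma pw_89b: "pw 89 \<le> 1.947257863" by (rule pw_step'[OF _ pw_88b]) (simp_all add: wheel_def)
lemma pw_90b: "pw 90 \<le> 1.947257863" by (rule pw_step'[OF _ pw_89b]) (simp_all add: wheel_def)
lemma pw_91b: "pw 91 \<le> 1.947495624" by (rule pw_step'[OF _ pw_90b]) (simp_all add: wheel_def)
lemma pw_92b: "pw 92 \<le> 1.947495624" by (rule pw_step'[OF _ pw_91b]) (simp_all add: wheel_def)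
lemma pw_93b: "pw 93 \<le> 1.947495624" by (rule pw_step'[OF _ pw_92b]) (simp_all add: wheel_def)
lemma pw_94b: "pw 94 \<le> 1.947495624" by (rule pw_step'[OF _ pw_93b]) (simp_all add: wheel_def)
lemma pw_95b: "pw 95 \<le> 1.947713709" by (rule pw_step'[OF _ pw_94b]) (simp_all add: wheel_def)
lemma pw_96b: "pw 96 \<le> 1.947713709" by (rule pw_step'[OF _ pw_95b]) (simp_all add: wheel_def)
lemma pw_97b: "pw 97 \<le> 1.947922871" by (rule pw_step'[OF _ pw_96b]) (simp_all add: wheel_def)
lemma pw_98b: "pw 98 \<le> 1.947922871" by (rule pw_step'[OF _ pw_97b]) (simp_all add: wheel_def)
lemma pw_99b: "pw 99 \<le> 1.947922871" by (rule pw_step'[OF _ pw_98b]) (simp_all add: wheel_def)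
lemma pw_100b: "pw 100 \<le> 1.947922871" by (rule pw_step'[OF _ pw_99b]) (simp_all add: wheel_def)
lemma pw_101b: "pw 101 \<le> 1.948115735" by (rule pw_step'[OF _ pw_100b]) (simp_all add: wheel_def)
lemma pw_102b: "pw 102 \<le> 1.948115735" by (rule pw_step'[OF _ pw_101b]) (simp_all add: wheel_def)
lemma pw_103b: "pw 103 \<le> 1.948301164" by (rule pw_step'[OF _ pw_102b]) (simp_all add: wheel_def)
lemma pw_104b: "pw 104 \<le> 1.948301164" by (rule pw_step'[OF _ pw_103b]) (simp_all add: wheel_def)
lemma pw_105b: "pw 105 \<le> 1.948301164" by (rule pw_step'[OF _ pw_104b]) (simp_all add: wheel_def)
lemma pw_106b: "pw 106 \<le> 1.948301164" by (rule pw_step'[OF _ pw_105b]) (simp_all add: wheel_def)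
lemma pw_107b: "pw 107 \<le> 1.948472942" by (rule pw_step'[OF _ pw_106b]) (simp_all add: wheel_def)
lemma pw_108b: "pw 108 \<le> 1.948472942" by (rule pw_step'[OF _ pw_107b]) (simp_all add: wheel_def)
lemma pw_109b: "pw 109 \<le> 1.948638460" by (rule pw_step'[OF _ pw_108b]) (simp_all add: wheel_def)
lemma pw_110b: "pw 110 \<le> 1.948638460" by (rule pw_step'[OF _ pw_109b]) (simp_all add: wheel_def)
lemma pw_111b: "pw 111 \<le> 1.948638460" by (rule pw_step'[OF _ pw_110b]) (simp_all add: wheel_def)
lemma pw_112b: "pw 112 \<le> 1.948638460" by (rule pw_step'[OF _ pw_111b]) (simp_all add: wheel_def)
lemma pw_113b: "pw 113 \<le> 1.948792430" by (rule pw_step'[OF _ pw_112b]) (simp_all add: wheel_def)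
lemma pw_114b: "pw 114 \<le> 1.948792430" by (rule pw_step'[OF _ pw_113b]) (simp_all add: wheel_def)
lemma pw_115b: "pw 115 \<le> 1.948941080" by (rule pw_step'[OF _ pw_114b]) (simp_all add: wheel_def)
lemma pw_116b: "pw 116 \<le> 1.948941080" by (rule pw_step'[OF _ pw_115b]) (simp_all add: wheel_def)
lemma pw_117b: "pw 117 \<le> 1.948941080" by (rule pw_step'[OF _ pw_116b]) (simp_all add: wheel_def)
lemma pw_118b: "pw 118 \<le> 1.948941080" by (rule pw_step'[OF _ pw_117b]) (simp_all add: wheel_def)
lemma pw_119b: "pw 119 \<le> 1.949079874" by (rule pw_step'[OF _ pw_118b]) (simp_all add: wheel_def)
lemma pw_120b: "pw 120 \<le> 1.949079874" by (rule pw_step'[OF _ pw_119b]) (simp_all add: wheel_def)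
lemma pw_121b: "pw 121 \<le> 1.949214109" by (rule pw_step'[OF _ pw_120b]) (simp_all add: wheel_def)
lemma pw_122b: "pw 122 \<le> 1.949214109" by (rule pw_step'[OF _ pw_121b]) (simp_all add: wheel_def)
lemma pw_123b: "pw 123 \<le> 1.949214109" by (rule pw_step'[OF _ pw_122b]) (simp_all add: wheel_def)
lemma pw_124b: "pw 124 \<le> 1.949214109" by (rule pw_step'[OF _ pw_123b]) (simp_all add: wheel_def)
lemma pw_125b: "pw 125 \<le> 1.949339865" by (rule pw_step'[OF _ pw_124b]) (simp_all add: wheel_def)
lemma pw_126b: "pw 126 \<le> 1.949339865" by (rule pw_step'[OF _ pw_125b]) (simp_all add: wheel_def)
lemma pw_127b: "pw 127 \<le> 1.949461684" by (rule pw_step'[OF _ pw_126b]) (simp_all add: wheel_def)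
lemma pw_128b: "pw 128 \<le> 1.949461684" by (rule pw_step'[OF _ pw_127b]) (simp_all add: wheel_def)
lemma pw_129b: "pw 129 \<le> 1.949461684" by (rule pw_step'[OF _ pw_128b]) (simp_all add: wheel_def)
lemma pw_130b: "pw 130 \<le> 1.949461684" by (rule pw_step'[OF _ pw_129b]) (simp_all add: wheel_def)
lemma pw_131b: "pw 131 \<le> 1.949576157" by (rule pw_step'[OF _ pw_130b]) (simp_all add: wheel_def)
lemma pw_132b: "pw 132 \<le> 1.949576157" by (rule pw_step'[OF _ pw_131b]) (simp_all add: wheel_def)
lemma pw_133b: "pw 133 \<le> 1.949687206" by (rule pw_step'[OF _ pw_132b]) (simp_all add: wheel_def)
lemma pw_134b: "pw 134 \<le> 1.949687206" by (rule pw_step'[OF _ pw_133b]) (simp_all add: wheel_def)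
lemma pw_135b: "pw 135 \<le> 1.949687206" by (rule pw_step'[OF _ pw_134b]) (simp_all add: wheel_def)
lemma pw_136b: "pw 136 \<le> 1.949687206" by (rule pw_step'[OF _ pw_135b]) (simp_all add: wheel_def)
lemma pw_137b: "pw 137 \<le> 1.949791848" by (rule pw_step'[OF _ pw_136b]) (simp_all add: wheel_def)
lemma pw_138b: "pw 138 \<le> 1.949791848" by (rule pw_step'[OF _ pw_137b]) (simp_all add: wheel_def)
lemma pw_139b: "pw 139 \<le> 1.949893495" by (rule pw_step'[OF _ pw_138b]) (simp_all add: wheel_def)
lemma pw_140b: "pw 140 \<le> 1.949893495" by (rule pw_step'[OF _ pw_139b]) (simp_all add: wheel_def)
lemma pw_141b: "pw 141 \<le> 1.949893495" by (rule pw_step'[OF _ pw_140b]) (simp_all add: wheel_def)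
lemma pw_142b: "pw 142 \<le> 1.949893495" by (rule pw_step'[OF _ pw_141b]) (simp_all add: wheel_def)
lemma pw_143b: "pw 143 \<le> 1.949989521" by (rule pw_step'[OF _ pw_142b]) (simp_all add: wheel_def)
lemma pw_144b: "pw 144 \<le> 1.949989521" by (rule pw_step'[OF _ pw_143b]) (simp_all add: wheel_def)
lemma pw_145b: "pw 145 \<le> 1.950082912" by (rule pw_step'[OF _ pw_144b]) (simp_all add: wheel_def)
lemma pw_146b: "pw 146 \<le> 1.950082912" by (rule pw_step'[OF _ pw_145b]) (simp_all add: wheel_def)
lemma pw_147b: "pw 147 \<le> 1.950082912" by (rule pw_step'[OF _ pw_146b]) (simp_all add: wheel_def)
lemma pw_148b: "pw 148 \<le> 1.950082912" by (rule pw_step'[OF _ pw_147b]) (simp_all add: wheel_def)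
lemma pw_149b: "pw 149 \<le> 1.950171344" by (rule pw_step'[OF _ pw_148b]) (simp_all add: wheel_def)
lemma pw_150b: "pw 150 \<le> 1.950171344" by (rule pw_step'[OF _ pw_149b]) (simp_all add: wheel_def)

lemma Abound: "T1 N \<le> 1.97"
proof -
  have "T1 N \<le> pw N" unfolding T1_prod by (rule prod_Qs_le_pw)
  also have "pw N \<le> 1.950171344 * (150 / 149)"
  proof (cases "N \<le> 150")
    case True
    have "pw N \<le> pw 150" by (rule pw_mono[OF True])
    also have "\<dots> \<le> 1.950171344" by (rule pw_150b)
    finally show ?thesis by simp
  next
    case False
    hence "pw N \<le> pw 150 * (real 150 / (real 150 - 1)) * ((real N - 1) / real N)"
      by (intro pw_tail) auto
    also have "\<dots> \<le> pw 150 * (real 150 / (real 150 - 1)) * 1"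
    proof (rule mult_left_mono)
      show "(real N - 1) / real N \<le> 1" using False by (simp add: divide_le_eq_1)
    qed (use pw_pos[of 150] in auto)
    also have "\<dots> \<le> 1.950171344 * (150 / 149)"
      using pw_150b by simp
    finally show ?thesis .
  qed
  also have "\<dots> \<le> 1.97" by simp
  finally show ?thesis .
qed

lemma harm_0b: "harm 0 \<le> (0::real)" by (simp add: harm_def)
lemma harm_1b: "harm 1 \<le> (1.000000000::real)" by (rule harm_step'[OF _ harm_0b]) simp_all
lemma harm_2b: "harm 2 \<le> (1.500000000::real)" by (rule harm_step'[OF _ harm_1b]) simp_all
lemma harm_3b: "harm 3 \<le> (1.833333334::real)" by (rule harm_step'[OF _ harm_2b]) simp_all
lemma harm_4b: "harm 4 \<le> (2.083333334::real)" by (rule harm_step'[OF _ harm_3b]) simp_all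
lemma harm_5b: "harm 5 \<le> (2.283333334::real)" by (rule harm_step'[OF _ harm_4b]) simp_all
lemma harm_6b: "harm 6 \<le> (2.450000001::real)" by (rule harm_step'[OF _ harm_5b]) simp_all
lemma harm_7b: "harm 7 \<le> (2.592857144::real)" by (rule harm_step'[OF _ harm_6b]) simp_all
lemma harm_8b: "harm 8 \<le> (2.717857144::real)" by (rule harm_step'[OF _ harm_7b]) simp_all
lemma harm_9b: "harm 9 \<le> (2.828968256::real)" by (rule harm_step'[OF _ harm_8b]) simp_all
lemma harm_10b: "harm 10 \<le> (2.928968256::real)" by (rule harm_step'[OF _ harm_9b]) simp_all
lemma harm_11b: "harm 11 \<le> (3.019877347::real)" by (rule harm_step'[OF _ harm_10b]) simp_all
lemma harm_12b: "harm 12 \<le> (3.103210681::real)" by (rule harm_step'[OF _ harm_11b]) simp_all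
lemma harm_13b: "harm 13 \<le> (3.180133758::real)" by (rule harm_step'[OF _ harm_12b]) simp_all
lemma harm_14b: "harm 14 \<le> (3.251562330::real)" by (rule harm_step'[OF _ harm_13b]) simp_all
lemma harm_15b: "harm 15 \<le> (3.318228997::real)" by (rule harm_step'[OF _ harm_14b]) simp_all
lemma harm_16b: "harm 16 \<le> (3.380728997::real)" by (rule harm_step'[OF _ harm_15b]) simp_all
lemma harm_17b: "harm 17 \<le> (3.439552527::real)" by (rule harm_step'[OF _ harm_16b]) simp_all
lemma harm_18b: "harm 18 \<le> (3.495108083::real)" by (rule harm_step'[OF _ harm_17b]) simp_all
lemma harm_19b: "harm 19 \<le> (3.547739662::real)" by (rule harm_step'[OF _ harm_18b]) simp_all
lemma harm_20b: "harm 20 \<le> (3.597739662::real)" by (rule harm_step'[OF _ harm_19b]) simp_all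
lemma harm_21b: "harm 21 \<le> (3.645358710::real)" by (rule harm_step'[OF _ harm_20b]) simp_all
lemma harm_22b: "harm 22 \<le> (3.690813256::real)" by (rule harm_step'[OF _ harm_21b]) simp_all
lemma harm_23b: "harm 23 \<le> (3.734291517::real)" by (rule harm_step'[OF _ harm_22b]) simp_all
lemma harm_24b: "harm 24 \<le> (3.775958184::real)" by (rule harm_step'[OF _ harm_23b]) simp_all
lemma harm_25b: "harm 25 \<le> (3.815958184::real)" by (rule harm_step'[OF _ harm_24b]) simp_all
lemma harm_26b: "harm 26 \<le> (3.854419723::real)" by (rule harm_step'[OF _ harm_25b]) simp_all
lemma harm_27b: "harm 27 \<le> (3.891456761::real)" by (rule harm_step'[OF _ harm_26b]) simp_all
lemma harm_28b: "harm 28 \<le> (3.927171047::real)" by (rule harm_step'[OF _ harm_27b]) simp_all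
lemma harm_29b: "harm 29 \<le> (3.961653806::real)" by (rule harm_step'[OF _ harm_28b]) simp_all
lemma harm_30b: "harm 30 \<le> (3.994987140::real)" by (rule harm_step'[OF _ harm_29b]) simp_all
lemma harm_31b: "harm 31 \<le> (4.027245205::real)" by (rule harm_step'[OF _ harm_30b]) simp_all
lemma harm_32b: "harm 32 \<le> (4.058495205::real)" by (rule harm_step'[OF _ harm_31b]) simp_all
lemma harm_33b: "harm 33 \<le> (4.088798236::real)" by (rule harm_step'[OF _ harm_32b]) simp_all
lemma harm_34b: "harm 34 \<le> (4.118210001::real)" by (rule harm_step'[OF _ harm_33b]) simp_all
lemma harm_35b: "harm 35 \<le> (4.146781430::real)" by (rule harm_step'[OF _ harm_34b]) simp_all
lemma harm_36b: "harm 36 \<le> (4.174559208::real)" by (rule harm_step'[OF _ harm_35b]) simp_all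
lemma harm_37b: "harm 37 \<le> (4.201586236::real)" by (rule harm_step'[OF _ harm_36b]) simp_all
lemma harm_38b: "harm 38 \<le> (4.227902026::real)" by (rule harm_step'[OF _ harm_37b]) simp_all
lemma harm_39b: "harm 39 \<le> (4.253543052::real)" by (rule harm_step'[OF _ harm_38b]) simp_all
lemma harm_40b: "harm 40 \<le> (4.278543052::real)" by (rule harm_step'[OF _ harm_39b]) simp_all
lemma harm_41b: "harm 41 \<le> (4.302933296::real)" by (rule harm_step'[OF _ harm_40b]) simp_all
lemma harm_42b: "harm 42 \<le> (4.326742820::real)" by (rule harm_step'[OF _ harm_41b]) simp_all
lemma harm_43b: "harm 43 \<le> (4.349998634::real)" by (rule harm_step'[OF _ harm_42b]) simp_all
lemma harm_44b: "harm 44 \<le> (4.372725907::real)" by (rule harm_step'[OF _ harm_43b]) simp_all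
lemma harm_45b: "harm 45 \<le> (4.394948130::real)" by (rule harm_step'[OF _ harm_44b]) simp_all
lemma harm_46b: "harm 46 \<le> (4.416687261::real)" by (rule harm_step'[OF _ harm_45b]) simp_all
lemma harm_47b: "harm 47 \<le> (4.437963857::real)" by (rule harm_step'[OF _ harm_46b]) simp_all
lemma harm_48b: "harm 48 \<le> (4.458797191::real)" by (rule harm_step'[OF _ harm_47b]) simp_all
lemma harm_49b: "harm 49 \<le> (4.479205355::real)" by (rule harm_step'[OF _ harm_48b]) simp_all
lemma harm_50b: "harm 50 \<le> (4.499205355::real)" by (rule harm_step'[OF _ harm_49b]) simp_all
lemma harm_51b: "harm 51 \<le> (4.518813199::real)" by (rule harm_step'[OF _ harm_50b]) simp_all
lemma harm_52b: "harm 52 \<le> (4.538043969::real)" by (rule harm_step'[OF _ harm_51b]) simp_all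
lemma harm_53b: "harm 53 \<le> (4.556911894::real)" by (rule harm_step'[OF _ harm_52b]) simp_all
lemma harm_54b: "harm 54 \<le> (4.575430413::real)" by (rule harm_step'[OF _ harm_53b]) simp_all
lemma harm_55b: "harm 55 \<le> (4.593612232::real)" by (rule harm_step'[OF _ harm_54b]) simp_all
lemma harm_56b: "harm 56 \<le> (4.611469375::real)" by (rule harm_step'[OF _ harm_55b]) simp_all
lemma harm_57b: "harm 57 \<le> (4.629013235::real)" by (rule harm_step'[OF _ harm_56b]) simp_all
lemma harm_58b: "harm 58 \<le> (4.646254615::real)" by (rule harm_step'[OF _ harm_57b]) simp_all
lemma harm_59b: "harm 59 \<le> (4.663203768::real)" by (rule harm_step'[OF _ harm_58b]) simp_all
lemma harm_60b: "harm 60 \<le> (4.679870435::real)" by (rule harm_step'[OF _ harm_59b]) simp_all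
lemma harm_61b: "harm 61 \<le> (4.696263878::real)" by (rule harm_step'[OF _ harm_60b]) simp_all
lemma harm_62b: "harm 62 \<le> (4.712392911::real)" by (rule harm_step'[OF _ harm_61b]) simp_all
lemma harm_63b: "harm 63 \<le> (4.728265927::real)" by (rule harm_step'[OF _ harm_62b]) simp_all
lemma harm_64b: "harm 64 \<le> (4.743890927::real)" by (rule harm_step'[OF _ harm_63b]) simp_all
lemma harm_65b: "harm 65 \<le> (4.759275543::real)" by (rule harm_step'[OF _ harm_64b]) simp_all
lemma harm_66b: "harm 66 \<le> (4.774427059::real)" by (rule harm_step'[OF _ harm_65b]) simp_all
lemma harm_67b: "harm 67 \<le> (4.789352433::real)" by (rule harm_step'[OF _ harm_66b]) simp_all
lemma harm_68b: "harm 68 \<le> (4.804058316::real)" by (rule harm_step'[OF _ harm_67b]) simp_all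
lemma harm_69b: "harm 69 \<le> (4.818551070::real)" by (rule harm_step'[OF _ harm_68b]) simp_all
lemma harm_70b: "harm 70 \<le> (4.832836785::real)" by (rule harm_step'[OF _ harm_69b]) simp_all
lemma harm_71b: "harm 71 \<le> (4.846921293::real)" by (rule harm_step'[OF _ harm_70b]) simp_all
lemma harm_72b: "harm 72 \<le> (4.860810182::real)" by (rule harm_step'[OF _ harm_71b]) simp_all
lemma harm_73b: "harm 73 \<le> (4.874508813::real)" by (rule harm_step'[OF _ harm_72b]) simp_all
lemma harm_74b: "harm 74 \<le> (4.888022327::real)" by (rule harm_step'[OF _ harm_73b]) simp_all
lemma harm_75b: "harm 75 \<le> (4.901355661::real)" by (rule harm_step'[OF _ harm_74b]) simp_all
lemma harm_76b: "harm 76 \<le> (4.914513556::real)" by (rule harm_step'[OF _ harm_75b]) simp_all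
lemma harm_77b: "harm 77 \<le> (4.927500569::real)" by (rule harm_step'[OF _ harm_76b]) simp_all
lemma harm_78b: "harm 78 \<le> (4.940321082::real)" by (rule harm_step'[OF _ harm_77b]) simp_all
lemma harm_79b: "harm 79 \<le> (4.952979310::real)" by (rule harm_step'[OF _ harm_78b]) simp_all
lemma harm_80b: "harm 80 \<le> (4.965479310::real)" by (rule harm_step'[OF _ harm_79b]) simp_all
lemma harm_81b: "harm 81 \<le> (4.977824990::real)" by (rule harm_step'[OF _ harm_80b]) simp_all
lemma harm_82b: "harm 82 \<le> (4.990020112::real)" by (rule harm_step'[OF _ harm_81b]) simp_all
lemma harm_83b: "harm 83 \<le> (5.002068305::real)" by (rule harm_step'[OF _ harm_82b]) simp_all
lemma harm_84b: "harm 84 \<le> (5.013973067::real)" by (rule harm_step'[OF _ harm_83b]) simp_all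
lemma harm_85b: "harm 85 \<le> (5.025737773::real)" by (rule harm_step'[OF _ harm_84b]) simp_all
lemma harm_86b: "harm 86 \<le> (5.037365680::real)" by (rule harm_step'[OF _ harm_85b]) simp_all
lemma harm_87b: "harm 87 \<le> (5.048859933::real)" by (rule harm_step'[OF _ harm_86b]) simp_all
lemma harm_88b: "harm 88 \<le> (5.060223570::real)" by (rule harm_step'[OF _ harm_87b]) simp_all
lemma harm_89b: "harm 89 \<le> (5.071459526::real)" by (rule harm_step'[OF _ harm_88b]) simp_all
lemma harm_90b: "harm 90 \<le> (5.082570638::real)" by (rule harm_step'[OF _ harm_89b]) simp_all
lemma harm_91b: "harm 91 \<le> (5.093559649::real)" by (rule harm_step'[OF _ harm_90b]) simp_all
lemma harm_92b: "harm 92 \<le> (5.104429215::real)" by (rule harm_step'[OF _ harm_91b]) simp_all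
lemma harm_93b: "harm 93 \<le> (5.115181904::real)" by (rule harm_step'[OF _ harm_92b]) simp_all
lemma harm_94b: "harm 94 \<le> (5.125820202::real)" by (rule harm_step'[OF _ harm_93b]) simp_all
lemma harm_95b: "harm 95 \<le> (5.136346518::real)" by (rule harm_step'[OF _ harm_94b]) simp_all
lemma harm_96b: "harm 96 \<le> (5.146763185::real)" by (rule harm_step'[OF _ harm_95b]) simp_all
lemma harm_97b: "harm 97 \<le> (5.157072464::real)" by (rule harm_step'[OF _ harm_96b]) simp_all
lemma harm_98b: "harm 98 \<le> (5.167276546::real)" by (rule harm_step'[OF _ harm_97b]) simp_all
lemma harm_99b: "harm 99 \<le> (5.177377557::real)" by (rule harm_step'[OF _ harm_98b]) simp_all
lemma harm_100b: "harm 100 \<le> (5.187377557::real)" by (rule harm_step'[OF _ harm_99b]) simp_all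
lemma harm_101b: "harm 101 \<le> (5.197278548::real)" by (rule harm_step'[OF _ harm_100b]) simp_all
lemma harm_102b: "harm 102 \<le> (5.207082470::real)" by (rule harm_step'[OF _ harm_101b]) simp_all
lemma harm_103b: "harm 103 \<le> (5.216791208::real)" by (rule harm_step'[OF _ harm_102b]) simp_all
lemma harm_104b: "harm 104 \<le> (5.226406593::real)" by (rule harm_step'[OF _ harm_103b]) simp_all
lemma harm_105b: "harm 105 \<le> (5.235930403::real)" by (rule harm_step'[OF _ harm_104b]) simp_all
lemma harm_106b: "harm 106 \<le> (5.245364366::real)" by (rule harm_step'[OF _ harm_105b]) simp_all
lemma harm_107b: "harm 107 \<le> (5.254710161::real)" by (rule harm_step'[OF _ harm_106b]) simp_all
lemma harm_108b: "harm 108 \<le> (5.263969421::real)" by (rule harm_step'[OF _ harm_107b]) simp_all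
lemma harm_109b: "harm 109 \<le> (5.273143733::real)" by (rule harm_step'[OF _ harm_108b]) simp_all
lemma harm_110b: "harm 110 \<le> (5.282234643::real)" by (rule harm_step'[OF _ harm_109b]) simp_all
lemma harm_111b: "harm 111 \<le> (5.291243653::real)" by (rule harm_step'[OF _ harm_110b]) simp_all
lemma harm_112b: "harm 112 \<le> (5.300172225::real)" by (rule harm_step'[OF _ harm_111b]) simp_all
lemma harm_113b: "harm 113 \<le> (5.309021783::real)" by (rule harm_step'[OF _ harm_112b]) simp_all
lemma harm_114b: "harm 114 \<le> (5.317793713::real)" by (rule harm_step'[OF _ harm_113b]) simp_all
lemma harm_115b: "harm 115 \<le> (5.326489366::real)" by (rule harm_step'[OF _ harm_114b]) simp_all
lemma harm_116b: "harm 116 \<le> (5.335110056::real)" by (rule harm_step'[OF _ harm_115b]) simp_all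
lemma harm_117b: "harm 117 \<le> (5.343657065::real)" by (rule harm_step'[OF _ harm_116b]) simp_all
lemma harm_118b: "harm 118 \<le> (5.352131642::real)" by (rule harm_step'[OF _ harm_117b]) simp_all
lemma harm_119b: "harm 119 \<le> (5.360535004::real)" by (rule harm_step'[OF _ harm_118b]) simp_all
lemma harm_120b: "harm 120 \<le> (5.368868338::real)" by (rule harm_step'[OF _ harm_119b]) simp_all
lemma harm_121b: "harm 121 \<le> (5.377132801::real)" by (rule harm_step'[OF _ harm_120b]) simp_all
lemma harm_122b: "harm 122 \<le> (5.385329523::real)" by (rule harm_step'[OF _ harm_121b]) simp_all
lemma harm_123b: "harm 123 \<le> (5.393459605::real)" by (rule harm_step'[OF _ harm_122b]) simp_all
lemma harm_124b: "harm 124 \<le> (5.401524122::real)" by (rule harm_step'[OF _ harm_123b]) simp_all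
lemma harm_125b: "harm 125 \<le> (5.409524122::real)" by (rule harm_step'[OF _ harm_124b]) simp_all
lemma harm_126b: "harm 126 \<le> (5.417460630::real)" by (rule harm_step'[OF _ harm_125b]) simp_all
lemma harm_127b: "harm 127 \<le> (5.425334646::real)" by (rule harm_step'[OF _ harm_126b]) simp_all
lemma harm_128b: "harm 128 \<le> (5.433147146::real)" by (rule harm_step'[OF _ harm_127b]) simp_all
lemma tot_7: "totient (7::nat) = 6" by code_simp
lemma tot_8: "totient (8::nat) = 4" by code_simp
lemma tot_9: "totient (9::nat) = 6" by code_simp
lemma tot_10: "totient (10::nat) = 4" by code_simp
lemma tot_11: "totient (11::nat) = 10" by code_simp
lemma tot_12: "totient (12::nat) = 4" by code_simp
lemma tot_13: "totient (13::nat) = 12" by code_simp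
lemma tot_14: "totient (14::nat) = 6" by code_simp
lemma tot_15: "totient (15::nat) = 8" by code_simp
lemma tot_16: "totient (16::nat) = 8" by code_simp
lemma tot_17: "totient (17::nat) = 16" by code_simp
lemma tot_18: "totient (18::nat) = 6" by code_simp
lemma tot_19: "totient (19::nat) = 18" by code_simp
lemma tot_20: "totient (20::nat) = 8" by code_simp
lemma tot_21: "totient (21::nat) = 12" by code_simp
lemma tot_22: "totient (22::nat) = 10" by code_simp
lemma tot_23: "totient (23::nat) = 22" by code_simp
lemma tot_24: "totient (24::nat) = 8" by code_simp
lemma tot_25: "totient (25::nat) = 20" by code_simp
lemma tot_26: "totient (26::nat) = 12" by code_simp
lemma tot_27: "totient (27::nat) = 18" by code_simp
lemma tot_28: "totient (28::nat) = 12" by code_simp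
lemma tot_29: "totient (29::nat) = 28" by code_simp
lemma tot_30: "totient (30::nat) = 8" by code_simp
lemma tot_31: "totient (31::nat) = 30" by code_simp
lemma tot_32: "totient (32::nat) = 16" by code_simp
lemma tot_33: "totient (33::nat) = 20" by code_simp
lemma tot_34: "totient (34::nat) = 16" by code_simp
lemma tot_35: "totient (35::nat) = 24" by code_simp
lemma tot_36: "totient (36::nat) = 12" by code_simp
lemma tot_37: "totient (37::nat) = 36" by code_simp
lemma tot_38: "totient (38::nat) = 18" by code_simp
lemma tot_39: "totient (39::nat) = 24" by code_simp
lemma tot_40: "totient (40::nat) = 16" by code_simp
lemma tot_41: "totient (41::nat) = 40" by code_simp
lemma tot_42: "totient (42::nat) = 12" by code_simp
lemma tot_43: "totient (43::nat) = 42" by code_simp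
lemma tot_44: "totient (44::nat) = 20" by code_simp
lemma tot_45: "totient (45::nat) = 24" by code_simp
lemma tot_46: "totient (46::nat) = 22" by code_simp
lemma tot_47: "totient (47::nat) = 46" by code_simp
lemma tot_48: "totient (48::nat) = 16" by code_simp
lemma tot_49: "totient (49::nat) = 42" by code_simp
lemma tot_50: "totient (50::nat) = 20" by code_simp
lemma tot_51: "totient (51::nat) = 32" by code_simp
lemma tot_52: "totient (52::nat) = 24" by code_simp
lemma tot_53: "totient (53::nat) = 52" by code_simp
lemma tot_54: "totient (54::nat) = 18" by code_simp
lemma tot_55: "totient (55::nat) = 40" by code_simp
lemma tot_56: "totient (56::nat) = 24" by code_simp
lemma tot_57: "totient (57::nat) = 36" by code_simp
lemma tot_58: "totient (58::nat) = 28" by code_simp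
lemma tot_59: "totient (59::nat) = 58" by code_simp
lemma tot_60: "totient (60::nat) = 16" by code_simp
lemma tot_61: "totient (61::nat) = 60" by code_simp
lemma tot_62: "totient (62::nat) = 30" by code_simp
lemma tot_63: "totient (63::nat) = 36" by code_simp
lemma tot_64: "totient (64::nat) = 32" by code_simp
lemma tot_65: "totient (65::nat) = 48" by code_simp
lemma tot_66: "totient (66::nat) = 20" by code_simp
lemma tot_67: "totient (67::nat) = 66" by code_simp
lemma tot_68: "totient (68::nat) = 32" by code_simp
lemma tot_69: "totient (69::nat) = 44" by code_simp
lemma tot_70: "totient (70::nat) = 24" by code_simp
lemma tot_71: "totient (71::nat) = 70" by code_simp
lemma tot_72: "totient (72::nat) = 24" by code_simp
lemma tot_73: "totient (73::nat) = 72" by code_simp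
lemma tot_74: "totient (74::nat) = 36" by code_simp
lemma tot_75: "totient (75::nat) = 40" by code_simp
lemma tot_76: "totient (76::nat) = 36" by code_simp
lemma tot_77: "totient (77::nat) = 60" by code_simp
lemma tot_78: "totient (78::nat) = 24" by code_simp
lemma tot_79: "totient (79::nat) = 78" by code_simp
lemma tot_80: "totient (80::nat) = 32" by code_simp
lemma tot_81: "totient (81::nat) = 54" by code_simp
lemma tot_82: "totient (82::nat) = 40" by code_simp
lemma tot_83: "totient (83::nat) = 82" by code_simp
lemma tot_84: "totient (84::nat) = 24" by code_simp
lemma tot_85: "totient (85::nat) = 64" by code_simp
lemma tot_86: "totient (86::nat) = 42" by code_simp
lemma tot_87: "totient (87::nat) = 56" by code_simp
lemma tot_88: "totient (88::nat) = 40" by code_simp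
lemma tot_89: "totient (89::nat) = 88" by code_simp
lemma tot_90: "totient (90::nat) = 24" by code_simp
lemma tot_91: "totient (91::nat) = 72" by code_simp
lemma tot_92: "totient (92::nat) = 44" by code_simp
lemma tot_93: "totient (93::nat) = 60" by code_simp
lemma tot_94: "totient (94::nat) = 46" by code_simp
lemma tot_95: "totient (95::nat) = 72" by code_simp
lemma tot_96: "totient (96::nat) = 32" by code_simp
lemma tot_97: "totient (97::nat) = 96" by code_simp
lemma tot_98: "totient (98::nat) = 42" by code_simp
lemma tot_99: "totient (99::nat) = 60" by code_simp
lemma tot_100: "totient (100::nat) = 40" by code_simp
lemma tot_101: "totient (101::nat) = 100" by code_simp
lemma tot_102: "totient (102::nat) = 32" by code_simp
lemma tot_103: "totient (103::nat) = 102" by code_simp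
lemma tot_104: "totient (104::nat) = 48" by code_simp
lemma tot_105: "totient (105::nat) = 48" by code_simp
lemma tot_106: "totient (106::nat) = 52" by code_simp
lemma tot_107: "totient (107::nat) = 106" by code_simp
lemma tot_108: "totient (108::nat) = 36" by code_simp
lemma tot_109: "totient (109::nat) = 108" by code_simp
lemma tot_110: "totient (110::nat) = 40" by code_simp
lemma tot_111: "totient (111::nat) = 72" by code_simp
lemma tot_112: "totient (112::nat) = 48" by code_simp
lemma tot_113: "totient (113::nat) = 112" by code_simp
lemma tot_114: "totient (114::nat) = 36" by code_simp
lemma tot_115: "totient (115::nat) = 88" by code_simp
lemma tot_116: "totient (116::nat) = 56" by code_simp
lemma tot_117: "totient (117::nat) = 72" by code_simp
lemma tot_118: "totient (118::nat) = 58" by code_simp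
lemma tot_119: "totient (119::nat) = 96" by code_simp
lemma tot_120: "totient (120::nat) = 32" by code_simp
lemma tot_121: "totient (121::nat) = 110" by code_simp
lemma tot_122: "totient (122::nat) = 60" by code_simp
lemma tot_123: "totient (123::nat) = 80" by code_simp
lemma tot_124: "totient (124::nat) = 60" by code_simp
lemma tot_125: "totient (125::nat) = 100" by code_simp
lemma tot_126: "totient (126::nat) = 36" by code_simp
lemma tot_127: "totient (127::nat) = 126" by code_simp
lemma tot_128: "totient (128::nat) = 64" by code_simp
lemma tl_128b: "sum f {128<..128} \<le> 0" by simp
lemma tl_127b: "sum f {127<..128} \<le> 0.000122071" by (rule tail_step[OF _ _ tl_128b]) (simp_all add: f_def tot_128)
lemma tl_126b: "sum f {126<..128} \<le> 0.000184564" by (rule tail_step[OF _ _ tl_127b]) (simp_all add: f_def tot_127)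
lemma tl_125b: "sum f {125<..128} \<le> 0.000405023" by (rule tail_step[OF _ _ tl_126b]) (simp_all add: f_def tot_126)
lemma tl_124b: "sum f {124<..128} \<le> 0.000485023" by (rule tail_step[OF _ _ tl_125b]) (simp_all add: f_def tot_125)
lemma tl_123b: "sum f {123<..128} \<le> 0.000619432" by (rule tail_step[OF _ _ tl_124b]) (simp_all add: f_def tot_124)
lemma tl_122b: "sum f {122<..128} \<le> 0.000721059" by (rule tail_step[OF _ _ tl_123b]) (simp_all add: f_def tot_123)
lemma tl_121b: "sum f {121<..128} \<le> 0.000857672" by (rule tail_step[OF _ _ tl_122b]) (simp_all add: f_def tot_122)
lemma tl_120b: "sum f {120<..128} \<le> 0.000932804" by (rule tail_step[OF _ _ tl_121b]) (simp_all add: f_def tot_121)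
lemma tl_119b: "sum f {119<..128} \<le> 0.001193221" by (rule tail_step[OF _ _ tl_120b]) (simp_all add: f_def tot_120)
lemma tl_118b: "sum f {118<..128} \<le> 0.001280757" by (rule tail_step[OF _ _ tl_119b]) (simp_all add: f_def tot_119)
lemma tl_117b: "sum f {117<..128} \<le> 0.001426871" by (rule tail_step[OF _ _ tl_118b]) (simp_all add: f_def tot_118)
lemma tl_116b: "sum f {116<..128} \<le> 0.001545580" by (rule tail_step[OF _ _ tl_117b]) (simp_all add: f_def tot_117)
lemma tl_115b: "sum f {115<..128} \<le> 0.001699521" by (rule tail_step[OF _ _ tl_116b]) (simp_all add: f_def tot_116)
lemma tl_114b: "sum f {114<..128} \<le> 0.001798336" by (rule tail_step[OF _ _ tl_115b]) (simp_all add: f_def tot_115)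
lemma tl_113b: "sum f {113<..128} \<le> 0.002042001" by (rule tail_step[OF _ _ tl_114b]) (simp_all add: f_def tot_114)
lemma tl_112b: "sum f {112<..128} \<le> 0.002121015" by (rule tail_step[OF _ _ tl_113b]) (simp_all add: f_def tot_113)
lemma tl_111b: "sum f {111<..128} \<le> 0.002307027" by (rule tail_step[OF _ _ tl_112b]) (simp_all add: f_def tot_112)
lemma tl_110b: "sum f {110<..128} \<le> 0.002432153" by (rule tail_step[OF _ _ tl_111b]) (simp_all add: f_def tot_111)
lemma tl_109b: "sum f {109<..128} \<le> 0.002659426" by (rule tail_step[OF _ _ tl_110b]) (simp_all add: f_def tot_110)
lemma tl_108b: "sum f {108<..128} \<le> 0.002744374" by (rule tail_step[OF _ _ tl_109b]) (simp_all add: f_def tot_109)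
lemma tl_107b: "sum f {107<..128} \<le> 0.003001576" by (rule tail_step[OF _ _ tl_108b]) (simp_all add: f_def tot_108)
lemma tl_106b: "sum f {106<..128} \<le> 0.003089744" by (rule tail_step[OF _ _ tl_107b]) (simp_all add: f_def tot_107)
lemma tl_105b: "sum f {105<..128} \<le> 0.003271167" by (rule tail_step[OF _ _ tl_106b]) (simp_all add: f_def tot_106)
lemma tl_104b: "sum f {104<..128} \<le> 0.003469580" by (rule tail_step[OF _ _ tl_105b]) (simp_all add: f_def tot_105)
lemma tl_103b: "sum f {103<..128} \<le> 0.003669901" by (rule tail_step[OF _ _ tl_104b]) (simp_all add: f_def tot_104)
lemma tl_102b: "sum f {102<..128} \<le> 0.003765085" by (rule tail_step[OF _ _ tl_103b]) (simp_all add: f_def tot_103)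
lemma tl_101b: "sum f {101<..128} \<le> 0.004071458" by (rule tail_step[OF _ _ tl_102b]) (simp_all add: f_def tot_102)
lemma tl_100b: "sum f {100<..128} \<le> 0.004170468" by (rule tail_step[OF _ _ tl_101b]) (simp_all add: f_def tot_101)
lemma tl_99b: "sum f {99<..128} \<le> 0.004420468" by (rule tail_step[OF _ _ tl_100b]) (simp_all add: f_def tot_100)
lemma tl_98b: "sum f {98<..128} \<le> 0.004588819" by (rule tail_step[OF _ _ tl_99b]) (simp_all add: f_def tot_99)
lemma tl_97b: "sum f {97<..128} \<le> 0.004831774" by (rule tail_step[OF _ _ tl_98b]) (simp_all add: f_def tot_98)
lemma tl_96b: "sum f {96<..128} \<le> 0.004939163" by (rule tail_step[OF _ _ tl_97b]) (simp_all add: f_def tot_97)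
lemma tl_95b: "sum f {95<..128} \<le> 0.005264684" by (rule tail_step[OF _ _ tl_96b]) (simp_all add: f_def tot_96)
lemma tl_94b: "sum f {94<..128} \<le> 0.005410883" by (rule tail_step[OF _ _ tl_95b]) (simp_all add: f_def tot_95)
lemma tl_93b: "sum f {93<..128} \<le> 0.005642151" by (rule tail_step[OF _ _ tl_94b]) (simp_all add: f_def tot_94)
lemma tl_92b: "sum f {92<..128} \<le> 0.005821363" by (rule tail_step[OF _ _ tl_93b]) (simp_all add: f_def tot_93)
lemma tl_91b: "sum f {91<..128} \<le> 0.006068399" by (rule tail_step[OF _ _ tl_92b]) (simp_all add: f_def tot_92)
lemma tl_90b: "sum f {90<..128} \<le> 0.006221025" by (rule tail_step[OF _ _ tl_91b]) (simp_all add: f_def tot_91)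
lemma tl_89b: "sum f {89<..128} \<le> 0.006683988" by (rule tail_step[OF _ _ tl_90b]) (simp_all add: f_def tot_90)
lemma tl_88b: "sum f {88<..128} \<le> 0.006811670" by (rule tail_step[OF _ _ tl_89b]) (simp_all add: f_def tot_89)
lemma tl_87b: "sum f {87<..128} \<le> 0.007095761" by (rule tail_step[OF _ _ tl_88b]) (simp_all add: f_def tot_88)
lemma tl_86b: "sum f {86<..128} \<le> 0.007301016" by (rule tail_step[OF _ _ tl_87b]) (simp_all add: f_def tot_87)
lemma tl_85b: "sum f {85<..128} \<le> 0.007577871" by (rule tail_step[OF _ _ tl_86b]) (simp_all add: f_def tot_86)
lemma tl_84b: "sum f {84<..128} \<le> 0.007761695" by (rule tail_step[OF _ _ tl_85b]) (simp_all add: f_def tot_85)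
lemma tl_83b: "sum f {83<..128} \<le> 0.008257727" by (rule tail_step[OF _ _ tl_84b]) (simp_all add: f_def tot_84)
lemma tl_82b: "sum f {82<..128} \<le> 0.008404657" by (rule tail_step[OF _ _ tl_83b]) (simp_all add: f_def tot_83)
lemma tl_81b: "sum f {81<..128} \<le> 0.008709536" by (rule tail_step[OF _ _ tl_82b]) (simp_all add: f_def tot_82)
lemma tl_80b: "sum f {80<..128} \<le> 0.008938160" by (rule tail_step[OF _ _ tl_81b]) (simp_all add: f_def tot_81)
lemma tl_79b: "sum f {79<..128} \<le> 0.009328785" by (rule tail_step[OF _ _ tl_80b]) (simp_all add: f_def tot_80)
lemma tl_78b: "sum f {78<..128} \<le> 0.009491070" by (rule tail_step[OF _ _ tl_79b]) (simp_all add: f_def tot_79)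
lemma tl_77b: "sum f {77<..128} \<le> 0.010025259" by (rule tail_step[OF _ _ tl_78b]) (simp_all add: f_def tot_78)
lemma tl_76b: "sum f {76<..128} \<le> 0.010241710" by (rule tail_step[OF _ _ tl_77b]) (simp_all add: f_def tot_77)
lemma tl_75b: "sum f {75<..128} \<le> 0.010607208" by (rule tail_step[OF _ _ tl_76b]) (simp_all add: f_def tot_76)
lemma tl_74b: "sum f {74<..128} \<le> 0.010940542" by (rule tail_step[OF _ _ tl_75b]) (simp_all add: f_def tot_75)
lemma tl_73b: "sum f {73<..128} \<le> 0.011315918" by (rule tail_step[OF _ _ tl_74b]) (simp_all add: f_def tot_74)
lemma tl_72b: "sum f {72<..128} \<le> 0.011506177" by (rule tail_step[OF _ _ tl_73b]) (simp_all add: f_def tot_73)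
lemma tl_71b: "sum f {71<..128} \<le> 0.012084881" by (rule tail_step[OF _ _ tl_72b]) (simp_all add: f_def tot_72)
lemma tl_70b: "sum f {70<..128} \<le> 0.012286089" by (rule tail_step[OF _ _ tl_71b]) (simp_all add: f_def tot_71)
lemma tl_69b: "sum f {69<..128} \<le> 0.012881328" by (rule tail_step[OF _ _ tl_70b]) (simp_all add: f_def tot_70)
lemma tl_68b: "sum f {68<..128} \<le> 0.013210709" by (rule tail_step[OF _ _ tl_69b]) (simp_all add: f_def tot_69)
lemma tl_67b: "sum f {67<..128} \<le> 0.013670268" by (rule tail_step[OF _ _ tl_68b]) (simp_all add: f_def tot_68)
lemma tl_66b: "sum f {66<..128} \<le> 0.013896411" by (rule tail_step[OF _ _ tl_67b]) (simp_all add: f_def tot_67)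
lemma tl_65b: "sum f {65<..128} \<le> 0.014653987" by (rule tail_step[OF _ _ tl_66b]) (simp_all add: f_def tot_66)
lemma tl_64b: "sum f {64<..128} \<le> 0.014974500" by (rule tail_step[OF _ _ tl_65b]) (simp_all add: f_def tot_65)
lemma tl_63b: "sum f {63<..128} \<le> 0.015462782" by (rule tail_step[OF _ _ tl_64b]) (simp_all add: f_def tot_64)
lemma tl_62b: "sum f {62<..128} \<le> 0.015903700" by (rule tail_step[OF _ _ tl_63b]) (simp_all add: f_def tot_63)
lemma tl_61b: "sum f {61<..128} \<le> 0.016441335" by (rule tail_step[OF _ _ tl_62b]) (simp_all add: f_def tot_62)
lemma tl_60b: "sum f {60<..128} \<le> 0.016714560" by (rule tail_step[OF _ _ tl_61b]) (simp_all add: f_def tot_61)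
lemma tl_59b: "sum f {59<..128} \<le> 0.017756227" by (rule tail_step[OF _ _ tl_60b]) (simp_all add: f_def tot_60)
lemma tl_58b: "sum f {58<..128} \<le> 0.018048454" by (rule tail_step[OF _ _ tl_59b]) (simp_all add: f_def tot_59)
lemma tl_57b: "sum f {57<..128} \<le> 0.018664218" by (rule tail_step[OF _ _ tl_58b]) (simp_all add: f_def tot_58)
lemma tl_56b: "sum f {56<..128} \<le> 0.019151548" by (rule tail_step[OF _ _ tl_57b]) (simp_all add: f_def tot_57)
lemma tl_55b: "sum f {55<..128} \<le> 0.019895596" by (rule tail_step[OF _ _ tl_56b]) (simp_all add: f_def tot_56)
lemma tl_54b: "sum f {54<..128} \<le> 0.020350142" by (rule tail_step[OF _ _ tl_55b]) (simp_all add: f_def tot_55)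
lemma tl_53b: "sum f {53<..128} \<le> 0.021378949" by (rule tail_step[OF _ _ tl_54b]) (simp_all add: f_def tot_54)
lemma tl_52b: "sum f {52<..128} \<le> 0.021741794" by (rule tail_step[OF _ _ tl_53b]) (simp_all add: f_def tot_53)
lemma tl_51b: "sum f {51<..128} \<le> 0.022543077" by (rule tail_step[OF _ _ tl_52b]) (simp_all add: f_def tot_52)
lemma tl_50b: "sum f {50<..128} \<le> 0.023155823" by (rule tail_step[OF _ _ tl_51b]) (simp_all add: f_def tot_51)
lemma tl_49b: "sum f {49<..128} \<le> 0.024155823" by (rule tail_step[OF _ _ tl_50b]) (simp_all add: f_def tot_50)
lemma tl_48b: "sum f {48<..128} \<le> 0.024641732" by (rule tail_step[OF _ _ tl_49b]) (simp_all add: f_def tot_49)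
lemma tl_47b: "sum f {47<..128} \<le> 0.025943816" by (rule tail_step[OF _ _ tl_48b]) (simp_all add: f_def tot_48)
lemma tl_46b: "sum f {46<..128} \<le> 0.026406351" by (rule tail_step[OF _ _ tl_47b]) (simp_all add: f_def tot_47)
lemma tl_45b: "sum f {45<..128} \<le> 0.027394494" by (rule tail_step[OF _ _ tl_46b]) (simp_all add: f_def tot_46)
lemma tl_44b: "sum f {44<..128} \<le> 0.028320420" by (rule tail_step[OF _ _ tl_45b]) (simp_all add: f_def tot_45)
lemma tl_43b: "sum f {43<..128} \<le> 0.029456784" by (rule tail_step[OF _ _ tl_44b]) (simp_all add: f_def tot_44)
lemma tl_42b: "sum f {42<..128} \<le> 0.030010494" by (rule tail_step[OF _ _ tl_43b]) (simp_all add: f_def tot_43)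
lemma tl_41b: "sum f {41<..128} \<le> 0.031994621" by (rule tail_step[OF _ _ tl_42b]) (simp_all add: f_def tot_42)
lemma tl_40b: "sum f {40<..128} \<le> 0.032604378" by (rule tail_step[OF _ _ tl_41b]) (simp_all add: f_def tot_41)
lemma tl_39b: "sum f {39<..128} \<le> 0.034166878" by (rule tail_step[OF _ _ tl_40b]) (simp_all add: f_def tot_40)
lemma tl_38b: "sum f {38<..128} \<le> 0.035235255" by (rule tail_step[OF _ _ tl_39b]) (simp_all add: f_def tot_39)
lemma tl_37b: "sum f {37<..128} \<le> 0.036697244" by (rule tail_step[OF _ _ tl_38b]) (simp_all add: f_def tot_38)
lemma tl_36b: "sum f {36<..128} \<le> 0.037447995" by (rule tail_step[OF _ _ tl_37b]) (simp_all add: f_def tot_37)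
lemma tl_35b: "sum f {35<..128} \<le> 0.039762810" by (rule tail_step[OF _ _ tl_36b]) (simp_all add: f_def tot_36)
lemma tl_34b: "sum f {34<..128} \<le> 0.040953287" by (rule tail_step[OF _ _ tl_35b]) (simp_all add: f_def tot_35)
lemma tl_33b: "sum f {33<..128} \<le> 0.042791523" by (rule tail_step[OF _ _ tl_34b]) (simp_all add: f_def tot_34)
lemma tl_32b: "sum f {32<..128} \<le> 0.044306675" by (rule tail_step[OF _ _ tl_33b]) (simp_all add: f_def tot_33)
lemma tl_31b: "sum f {31<..128} \<le> 0.046259800" by (rule tail_step[OF _ _ tl_32b]) (simp_all add: f_def tot_32)
lemma tl_30b: "sum f {30<..128} \<le> 0.047335069" by (rule tail_step[OF _ _ tl_31b]) (simp_all add: f_def tot_31)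
lemma tl_29b: "sum f {29<..128} \<le> 0.051501736" by (rule tail_step[OF _ _ tl_30b]) (simp_all add: f_def tot_30)
lemma tl_28b: "sum f {28<..128} \<le> 0.052733264" by (rule tail_step[OF _ _ tl_29b]) (simp_all add: f_def tot_29)
lemma tl_27b: "sum f {27<..128} \<le> 0.055709455" by (rule tail_step[OF _ _ tl_28b]) (simp_all add: f_def tot_28)
lemma tl_26b: "sum f {26<..128} \<le> 0.057767069" by (rule tail_step[OF _ _ tl_27b]) (simp_all add: f_def tot_27)
lemma tl_25b: "sum f {25<..128} \<le> 0.060972198" by (rule tail_step[OF _ _ tl_26b]) (simp_all add: f_def tot_26)
lemma tl_24b: "sum f {24<..128} \<le> 0.062972198" by (rule tail_step[OF _ _ tl_25b]) (simp_all add: f_def tot_25)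
lemma tl_23b: "sum f {23<..128} \<le> 0.068180532" by (rule tail_step[OF _ _ tl_24b]) (simp_all add: f_def tot_24)
lemma tl_22b: "sum f {22<..128} \<le> 0.070156817" by (rule tail_step[OF _ _ tl_23b]) (simp_all add: f_def tot_23)
lemma tl_21b: "sum f {21<..128} \<le> 0.074702272" by (rule tail_step[OF _ _ tl_22b]) (simp_all add: f_def tot_22)
lemma tl_20b: "sum f {20<..128} \<le> 0.078670526" by (rule tail_step[OF _ _ tl_21b]) (simp_all add: f_def tot_21)
lemma tl_19b: "sum f {19<..128} \<le> 0.084920526" by (rule tail_step[OF _ _ tl_20b]) (simp_all add: f_def tot_20)
lemma tl_18b: "sum f {18<..128} \<le> 0.087844503" by (rule tail_step[OF _ _ tl_19b]) (simp_all add: f_def tot_19)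
lemma tl_17b: "sum f {17<..128} \<le> 0.097103763" by (rule tail_step[OF _ _ tl_18b]) (simp_all add: f_def tot_18)
lemma tl_16b: "sum f {16<..128} \<le> 0.100780234" by (rule tail_step[OF _ _ tl_17b]) (simp_all add: f_def tot_17)
lemma tl_15b: "sum f {15<..128} \<le> 0.108592734" by (rule tail_step[OF _ _ tl_16b]) (simp_all add: f_def tot_16)
lemma tl_14b: "sum f {14<..128} \<le> 0.116926068" by (rule tail_step[OF _ _ tl_15b]) (simp_all add: f_def tot_15)
lemma tl_13b: "sum f {13<..128} \<le> 0.128830830" by (rule tail_step[OF _ _ tl_14b]) (simp_all add: f_def tot_14)
lemma tl_12b: "sum f {12<..128} \<le> 0.135241087" by (rule tail_step[OF _ _ tl_13b]) (simp_all add: f_def tot_13)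
lemma tl_11b: "sum f {11<..128} \<le> 0.156074421" by (rule tail_step[OF _ _ tl_12b]) (simp_all add: f_def tot_12)
lemma tl_10b: "sum f {10<..128} \<le> 0.165165331" by (rule tail_step[OF _ _ tl_11b]) (simp_all add: f_def tot_11)
lemma tl_9b: "sum f {9<..128} \<le> 0.190165331" by (rule tail_step[OF _ _ tl_10b]) (simp_all add: f_def tot_10)
lemma tl_8b: "sum f {8<..128} \<le> 0.208683850" by (rule tail_step[OF _ _ tl_9b]) (simp_all add: f_def tot_9)
lemma tl_7b: "sum f {7<..128} \<le> 0.239933850" by (rule tail_step[OF _ _ tl_8b]) (simp_all add: f_def tot_8)
lemma tl_6b: "sum f {6<..128} \<le> 0.263743374" by (rule tail_step[OF _ _ tl_7b]) (simp_all add: f_def tot_7)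
lemma pf_127: "Pfin 127" unfolding Pfin_def using tl_127b by simp
lemma pf_126: "Pfin 126" unfolding Pfin_def using tl_126b by simp
lemma pf_125: "Pfin 125" unfolding Pfin_def using tl_125b by simp
lemma pf_124: "Pfin 124" unfolding Pfin_def using tl_124b by simp
lemma pf_123: "Pfin 123" unfolding Pfin_def using tl_123b by simp
lemma pf_122: "Pfin 122" unfolding Pfin_def using tl_122b by simp
lemma pf_121: "Pfin 121" unfolding Pfin_def using tl_121b by simp
lemma pf_120: "Pfin 120" unfolding Pfin_def using tl_120b by simp
lemma pf_119: "Pfin 119" unfolding Pfin_def using tl_119b by simp
lemma pf_118: "Pfin 118" unfolding Pfin_def using tl_118b by simp
lemma pf_117: "Pfin 117" unfolding Pfin_def using tl_117b by simp
lemma pf_116: "Pfin 116" unfolding Pfin_def using tl_116b by simp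
lemma pf_115: "Pfin 115" unfolding Pfin_def using tl_115b by simp
lemma pf_114: "Pfin 114" unfolding Pfin_def using tl_114b by simp
lemma pf_113: "Pfin 113" unfolding Pfin_def using tl_113b by simp
lemma pf_112: "Pfin 112" unfolding Pfin_def using tl_112b by simp
lemma pf_111: "Pfin 111" unfolding Pfin_def using tl_111b by simp
lemma pf_110: "Pfin 110" unfolding Pfin_def using tl_110b by simp
lemma pf_109: "Pfin 109" unfolding Pfin_def using tl_109b by simp
lemma pf_108: "Pfin 108" unfolding Pfin_def using tl_108b by simp
lemma pf_107: "Pfin 107" unfolding Pfin_def using tl_107b by simp
lemma pf_106: "Pfin 106" unfolding Pfin_def using tl_106b by simp
lemma pf_105: "Pfin 105" unfolding Pfin_def using tl_105b by simp
lemma pf_104: "Pfin 104" unfolding Pfin_def using tl_104b by simp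
lemma pf_103: "Pfin 103" unfolding Pfin_def using tl_103b by simp
lemma pf_102: "Pfin 102" unfolding Pfin_def using tl_102b by simp
lemma pf_101: "Pfin 101" unfolding Pfin_def using tl_101b by simp
lemma pf_100: "Pfin 100" unfolding Pfin_def using tl_100b by simp
lemma pf_99: "Pfin 99" unfolding Pfin_def using tl_99b by simp
lemma pf_98: "Pfin 98" unfolding Pfin_def using tl_98b by simp
lemma pf_97: "Pfin 97" unfolding Pfin_def using tl_97b by simp
lemma pf_96: "Pfin 96" unfolding Pfin_def using tl_96b by simp
lemma pf_95: "Pfin 95" unfolding Pfin_def using tl_95b by simp
lemma pf_94: "Pfin 94" unfolding Pfin_def using tl_94b by simp
lemma pf_93: "Pfin 93" unfolding Pfin_def using tl_93b by simp
lemma pf_92: "Pfin 92" unfolding Pfin_def using tl_92b by simp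
lemma pf_91: "Pfin 91" unfolding Pfin_def using tl_91b by simp
lemma pf_90: "Pfin 90" unfolding Pfin_def using tl_90b by simp
lemma pf_89: "Pfin 89" unfolding Pfin_def using tl_89b by simp
lemma pf_88: "Pfin 88" unfolding Pfin_def using tl_88b by simp
lemma pf_87: "Pfin 87" unfolding Pfin_def using tl_87b by simp
lemma pf_86: "Pfin 86" unfolding Pfin_def using tl_86b by simp
lemma pf_85: "Pfin 85" unfolding Pfin_def using tl_85b by simp
lemma pf_84: "Pfin 84" unfolding Pfin_def using tl_84b by simp
lemma pf_83: "Pfin 83" unfolding Pfin_def using tl_83b by simp
lemma pf_82: "Pfin 82" unfolding Pfin_def using tl_82b by simp
lemma pf_81: "Pfin 81" unfolding Pfin_def using tl_81b by simp
lemma pf_80: "Pfin 80" unfolding Pfin_def using tl_80b by simp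
lemma pf_79: "Pfin 79" unfolding Pfin_def using tl_79b by simp
lemma pf_78: "Pfin 78" unfolding Pfin_def using tl_78b by simp
lemma pf_77: "Pfin 77" unfolding Pfin_def using tl_77b by simp
lemma pf_76: "Pfin 76" unfolding Pfin_def using tl_76b by simp
lemma pf_75: "Pfin 75" unfolding Pfin_def using tl_75b by simp
lemma pf_74: "Pfin 74" unfolding Pfin_def using tl_74b by simp
lemma pf_73: "Pfin 73" unfolding Pfin_def using tl_73b by simp
lemma pf_72: "Pfin 72" unfolding Pfin_def using tl_72b by simp
lemma pf_71: "Pfin 71" unfolding Pfin_def using tl_71b by simp
lemma pf_70: "Pfin 70" unfolding Pfin_def using tl_70b by simp
lemma pf_69: "Pfin 69" unfolding Pfin_def using tl_69b by simp
lemma pf_68: "Pfin 68" unfolding Pfin_def using tl_68b by simp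
lemma pf_67: "Pfin 67" unfolding Pfin_def using tl_67b by simp
lemma pf_66: "Pfin 66" unfolding Pfin_def using tl_66b by simp
lemma pf_65: "Pfin 65" unfolding Pfin_def using tl_65b by simp
lemma pf_64: "Pfin 64" unfolding Pfin_def using tl_64b by simp
lemma pf_63: "Pfin 63" unfolding Pfin_def using tl_63b by simp
lemma pf_62: "Pfin 62" unfolding Pfin_def using tl_62b by simp
lemma pf_61: "Pfin 61" unfolding Pfin_def using tl_61b by simp
lemma pf_60: "Pfin 60" unfolding Pfin_def using tl_60b by simp
lemma pf_59: "Pfin 59" unfolding Pfin_def using tl_59b by simp
lemma pf_58: "Pfin 58" unfolding Pfin_def using tl_58b by simp
lemma pf_57: "Pfin 57" unfolding Pfin_def using tl_57b by simp
lemma pf_56: "Pfin 56" unfolding Pfin_def using tl_56b by simp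
lemma pf_55: "Pfin 55" unfolding Pfin_def using tl_55b by simp
lemma pf_54: "Pfin 54" unfolding Pfin_def using tl_54b by simp
lemma pf_53: "Pfin 53" unfolding Pfin_def using tl_53b by simp
lemma pf_52: "Pfin 52" unfolding Pfin_def using tl_52b by simp
lemma pf_51: "Pfin 51" unfolding Pfin_def using tl_51b by simp
lemma pf_50: "Pfin 50" unfolding Pfin_def using tl_50b by simp
lemma pf_49: "Pfin 49" unfolding Pfin_def using tl_49b by simp
lemma pf_48: "Pfin 48" unfolding Pfin_def using tl_48b by simp
lemma pf_47: "Pfin 47" unfolding Pfin_def using tl_47b by simp
lemma pf_46: "Pfin 46" unfolding Pfin_def using tl_46b by simp
lemma pf_45: "Pfin 45" unfolding Pfin_def using tl_45b by simp
lemma pf_44: "Pfin 44" unfolding Pfin_def using tl_44b by simp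
lemma pf_43: "Pfin 43" unfolding Pfin_def using tl_43b by simp
lemma pf_42: "Pfin 42" unfolding Pfin_def using tl_42b by simp
lemma pf_41: "Pfin 41" unfolding Pfin_def using tl_41b by simp
lemma pf_40: "Pfin 40" unfolding Pfin_def using tl_40b by simp
lemma pf_39: "Pfin 39" unfolding Pfin_def using tl_39b by simp
lemma pf_38: "Pfin 38" unfolding Pfin_def using tl_38b by simp
lemma pf_37: "Pfin 37" unfolding Pfin_def using tl_37b by simp
lemma pf_36: "Pfin 36" unfolding Pfin_def using tl_36b by simp
lemma pf_35: "Pfin 35" unfolding Pfin_def using tl_35b by simp
lemma pf_34: "Pfin 34" unfolding Pfin_def using tl_34b by simp
lemma pf_33: "Pfin 33" unfolding Pfin_def using tl_33b by simp
lemma pf_32: "Pfin 32" unfolding Pfin_def using tl_32b by simp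
lemma pf_31: "Pfin 31" unfolding Pfin_def using tl_31b by simp
lemma pf_30: "Pfin 30" unfolding Pfin_def using tl_30b by simp
lemma pf_29: "Pfin 29" unfolding Pfin_def using tl_29b by simp
lemma pf_28: "Pfin 28" unfolding Pfin_def using tl_28b by simp
lemma pf_27: "Pfin 27" unfolding Pfin_def using tl_27b by simp
lemma pf_26: "Pfin 26" unfolding Pfin_def using tl_26b by simp
lemma pf_25: "Pfin 25" unfolding Pfin_def using tl_25b by simp
lemma pf_24: "Pfin 24" unfolding Pfin_def using tl_24b by simp
lemma pf_23: "Pfin 23" unfolding Pfin_def using tl_23b by simp
lemma pf_22: "Pfin 22" unfolding Pfin_def using tl_22b by simp
lemma pf_21: "Pfin 21" unfolding Pfin_def using tl_21b by simp
lemma pf_20: "Pfin 20" unfolding Pfin_def using tl_20b by simp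
lemma pf_19: "Pfin 19" unfolding Pfin_def using tl_19b by simp
lemma pf_18: "Pfin 18" unfolding Pfin_def using tl_18b by simp
lemma pf_17: "Pfin 17" unfolding Pfin_def using tl_17b by simp
lemma pf_16: "Pfin 16" unfolding Pfin_def using tl_16b by simp
lemma pf_15: "Pfin 15" unfolding Pfin_def using tl_15b by simp
lemma pf_14: "Pfin 14" unfolding Pfin_def using tl_14b by simp
lemma pf_13: "Pfin 13" unfolding Pfin_def using tl_13b by simp
lemma pf_12: "Pfin 12" unfolding Pfin_def using tl_12b by simp
lemma pf_11: "Pfin 11" unfolding Pfin_def using tl_11b by simp
lemma pf_10: "Pfin 10" unfolding Pfin_def using tl_10b by simp
lemma pf_9: "Pfin 9" unfolding Pfin_def using tl_9b by simp
lemma pf_8: "Pfin 8" unfolding Pfin_def using tl_8b by simp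
lemma pf_7: "Pfin 7" unfolding Pfin_def using tl_7b by simp
lemma pf_6: "Pfin 6" unfolding Pfin_def using tl_6b by simp
lemma all_127: "\<forall>k. 127 \<le> k \<and> k \<le> 127 \<longrightarrow> Pfin k" using pf_127 by (metis le_antisym)
lemma all_126: "\<forall>k. 126 \<le> k \<and> k \<le> 127 \<longrightarrow> Pfin k" by (rule down_step[OF _ pf_126]) (use all_127 in simp)
lemma all_125: "\<forall>k. 125 \<le> k \<and> k \<le> 127 \<longrightarrow> Pfin k" by (rule down_step[OF _ pf_125]) (use all_126 in simp)
lemma all_124: "\<forall>k. 124 \<le> k \<and> k \<le> 127 \<longrightarrow> Pfin k" by (rule down_step[OF _ pf_124]) (use all_125 in simp)
lemma all_123: "\<forall>k. 123 \<le> k \<and> k \<le> 127 \<longrightarrow> Pfin k" by (rule down_step[OF _ pf_123]) (use all_124 in simp)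
lemma all_122: "\<forall>k. 122 \<le> k \<and> k \<le> 127 \<longrightarrow> Pfin k" by (rule down_step[OF _ pf_122]) (use all_123 in simp)
lemma all_121: "\<forall>k. 121 \<le> k \<and> k \<le> 127 \<longrightarrow> Pfin k" by (rule down_step[OF _ pf_121]) (use all_122 in simp)
lemma all_120: "\<forall>k. 120 \<le> k \<and> k \<le> 127 \<longrightarrow> Pfin k" by (rule down_step[OF _ pf_120]) (use all_121 in simp)
lemma all_119: "\<forall>k. 119 \<le> k \<and> k \<le> 127 \<longrightarrow> Pfin k" by (rule down_step[OF _ pf_119]) (use all_120 in simp)
lemma all_118: "\<forall>k. 118 \<le> k \<and> k \<le> 127 \<longrightarrow> Pfin k" by (rule down_step[OF _ pf_118]) (use all_119 in simp)
lemma all_117: "\<forall>k. 117 \<le> k \<and> k \<le> 127 \<longrightarrow> Pfin k" by (rule down_step[OF _ pf_117]) (use all_118 in simp)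
lemma all_116: "\<forall>k. 116 \<le> k \<and> k \<le> 127 \<longrightarrow> Pfin k" by (rule down_step[OF _ pf_116]) (use all_117 in simp)
lemma all_115: "\<forall>k. 115 \<le> k \<and> k \<le> 127 \<longrightarrow> Pfin k" by (rule down_step[OF _ pf_115]) (use all_116 in simp)
lemma all_114: "\<forall>k. 114 \<le> k \<and> k \<le> 127 \<longrightarrow> Pfin k" by (rule down_step[OF _ pf_114]) (use all_115 in simp)
lemma all_113: "\<forall>k. 113 \<le> k \<and> k \<le> 127 \<longrightarrow> Pfin k" by (rule down_step[OF _ pf_113]) (use all_114 in simp)
lemma all_112: "\<forall>k. 112 \<le> k \<and> k \<le> 127 \<longrightarrow> Pfin k" by (rule down_step[OF _ pf_112]) (use all_113 in simp)
lemma all_111: "\<forall>k. 111 \<le> k \<and> k \<le> 127 \<longrightarrow> Pfin k" by (rule down_step[OF _ pf_111]) (use all_112 in simp)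
lemma all_110: "\<forall>k. 110 \<le> k \<and> k \<le> 127 \<longrightarrow> Pfin k" by (rule down_step[OF _ pf_110]) (use all_111 in simp)
lemma all_109: "\<forall>k. 109 \<le> k \<and> k \<le> 127 \<longrightarrow> Pfin k" by (rule down_step[OF _ pf_109]) (use all_110 in simp)
lemma all_108: "\<forall>k. 108 \<le> k \<and> k \<le> 127 \<longrightarrow> Pfin k" by (rule down_step[OF _ pf_108]) (use all_109 in simp)
lemma all_107: "\<forall>k. 107 \<le> k \<and> k \<le> 127 \<longrightarrow> Pfin k" by (rule down_step[OF _ pf_107]) (use all_108 in simp)
lemma all_106: "\<forall>k. 106 \<le> k \<and> k \<le> 127 \<longrightarrow> Pfin k" by (rule down_step[OF _ pf_106]) (use all_107 in simp)
lemma all_105: "\<forall>k. 105 \<le> k \<and> k \<le> 127 \<longrightarrow> Pfin k" by (rule down_step[OF _ pf_105]) (use all_106 in simp)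
lemma all_104: "\<forall>k. 104 \<le> k \<and> k \<le> 127 \<longrightarrow> Pfin k" by (rule down_step[OF _ pf_104]) (use all_105 in simp)
lemma all_103: "\<forall>k. 103 \<le> k \<and> k \<le> 127 \<longrightarrow> Pfin k" by (rule down_step[OF _ pf_103]) (use all_104 in simp)
lemma all_102: "\<forall>k. 102 \<le> k \<and> k \<le> 127 \<longrightarrow> Pfin k" by (rule down_step[OF _ pf_102]) (use all_103 in simp)
lemma all_101: "\<forall>k. 101 \<le> k \<and> k \<le> 127 \<longrightarrow> Pfin k" by (rule down_step[OF _ pf_101]) (use all_102 in simp)
lemma all_100: "\<forall>k. 100 \<le> k \<and> k \<le> 127 \<longrightarrow> Pfin k" by (rule down_step[OF _ pf_100]) (use all_101 in simp)
lemma all_99: "\<forall>k. 99 \<le> k \<and> k \<le> 127 \<longrightarrow> Pfin k" by (rule down_step[OF _ pf_99]) (use all_100 in simp)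
lemma all_98: "\<forall>k. 98 \<le> k \<and> k \<le> 127 \<longrightarrow> Pfin k" by (rule down_step[OF _ pf_98]) (use all_99 in simp)
lemma all_97: "\<forall>k. 97 \<le> k \<and> k \<le> 127 \<longrightarrow> Pfin k" by (rule down_step[OF _ pf_97]) (use all_98 in simp)
lemma all_96: "\<forall>k. 96 \<le> k \<and> k \<le> 127 \<longrightarrow> Pfin k" by (rule down_step[OF _ pf_96]) (use all_97 in simp)
lemma all_95: "\<forall>k. 95 \<le> k \<and> k \<le> 127 \<longrightarrow> Pfin k" by (rule down_step[OF _ pf_95]) (use all_96 in simp)
lemma all_94: "\<forall>k. 94 \<le> k \<and> k \<le> 127 \<longrightarrow> Pfin k" by (rule down_step[OF _ pf_94]) (use all_95 in simp)
lemma all_93: "\<forall>k. 93 \<le> k \<and> k \<le> 127 \<longrightarrow> Pfin k" by (rule down_step[OF _ pf_93]) (use all_94 in simp)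
lemma all_92: "\<forall>k. 92 \<le> k \<and> k \<le> 127 \<longrightarrow> Pfin k" by (rule down_step[OF _ pf_92]) (use all_93 in simp)
lemma all_91: "\<forall>k. 91 \<le> k \<and> k \<le> 127 \<longrightarrow> Pfin k" by (rule down_step[OF _ pf_91]) (use all_92 in simp)
lemma all_90: "\<forall>k. 90 \<le> k \<and> k \<le> 127 \<longrightarrow> Pfin k" by (rule down_step[OF _ pf_90]) (use all_91 in simp)
lemma all_89: "\<forall>k. 89 \<le> k \<and> k \<le> 127 \<longrightarrow> Pfin k" by (rule down_step[OF _ pf_89]) (use all_90 in simp)
lemma all_88: "\<forall>k. 88 \<le> k \<and> k \<le> 127 \<longrightarrow> Pfin k" by (rule down_step[OF _ pf_88]) (use all_89 in simp)
lemma all_87: "\<forall>k. 87 \<le> k \<and> k \<le> 127 \<longrightarrow> Pfin k" by (rule down_step[OF _ pf_87]) (use all_88 in simp)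
lemma all_86: "\<forall>k. 86 \<le> k \<and> k \<le> 127 \<longrightarrow> Pfin k" by (rule down_step[OF _ pf_86]) (use all_87 in simp)
lemma all_85: "\<forall>k. 85 \<le> k \<and> k \<le> 127 \<longrightarrow> Pfin k" by (rule down_step[OF _ pf_85]) (use all_86 in simp)
lemma all_84: "\<forall>k. 84 \<le> k \<and> k \<le> 127 \<longrightarrow> Pfin k" by (rule down_step[OF _ pf_84]) (use all_85 in simp)
lemma all_83: "\<forall>k. 83 \<le> k \<and> k \<le> 127 \<longrightarrow> Pfin k" by (rule down_step[OF _ pf_83]) (use all_84 in simp)
lemma all_82: "\<forall>k. 82 \<le> k \<and> k \<le> 127 \<longrightarrow> Pfin k" by (rule down_step[OF _ pf_82]) (use all_83 in simp)
lemma all_81: "\<forall>k. 81 \<le> k \<and> k \<le> 127 \<longrightarrow> Pfin k" by (rule down_step[OF _ pf_81]) (use all_82 in simp)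
lemma all_80: "\<forall>k. 80 \<le> k \<and> k \<le> 127 \<longrightarrow> Pfin k" by (rule down_step[OF _ pf_80]) (use all_81 in simp)
lemma all_79: "\<forall>k. 79 \<le> k \<and> k \<le> 127 \<longrightarrow> Pfin k" by (rule down_step[OF _ pf_79]) (use all_80 in simp)
lemma all_78: "\<forall>k. 78 \<le> k \<and> k \<le> 127 \<longrightarrow> Pfin k" by (rule down_step[OF _ pf_78]) (use all_79 in simp)
lemma all_77: "\<forall>k. 77 \<le> k \<and> k \<le> 127 \<longrightarrow> Pfin k" by (rule down_step[OF _ pf_77]) (use all_78 in simp)
lemma all_76: "\<forall>k. 76 \<le> k \<and> k \<le> 127 \<longrightarrow> Pfin k" by (rule down_step[OF _ pf_76]) (use all_77 in simp)
lemma all_75: "\<forall>k. 75 \<le> k \<and> k \<le> 127 \<longrightarrow> Pfin k" by (rule down_step[OF _ pf_75]) (use all_76 in simp)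
lemma all_74: "\<forall>k. 74 \<le> k \<and> k \<le> 127 \<longrightarrow> Pfin k" by (rule down_step[OF _ pf_74]) (use all_75 in simp)
lemma all_73: "\<forall>k. 73 \<le> k \<and> k \<le> 127 \<longrightarrow> Pfin k" by (rule down_step[OF _ pf_73]) (use all_74 in simp)
lemma all_72: "\<forall>k. 72 \<le> k \<and> k \<le> 127 \<longrightarrow> Pfin k" by (rule down_step[OF _ pf_72]) (use all_73 in simp)
lemma all_71: "\<forall>k. 71 \<le> k \<and> k \<le> 127 \<longrightarrow> Pfin k" by (rule down_step[OF _ pf_71]) (use all_72 in simp)
lemma all_70: "\<forall>k. 70 \<le> k \<and> k \<le> 127 \<longrightarrow> Pfin k" by (rule down_step[OF _ pf_70]) (use all_71 in simp)
lemma all_69: "\<forall>k. 69 \<le> k \<and> k \<le> 127 \<longrightarrow> Pfin k" by (rule down_step[OF _ pf_69]) (use all_70 in simp)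
lemma all_68: "\<forall>k. 68 \<le> k \<and> k \<le> 127 \<longrightarrow> Pfin k" by (rule down_step[OF _ pf_68]) (use all_69 in simp)
lemma all_67: "\<forall>k. 67 \<le> k \<and> k \<le> 127 \<longrightarrow> Pfin k" by (rule down_step[OF _ pf_67]) (use all_68 in simp)
lemma all_66: "\<forall>k. 66 \<le> k \<and> k \<le> 127 \<longrightarrow> Pfin k" by (rule down_step[OF _ pf_66]) (use all_67 in simp)
lemma all_65: "\<forall>k. 65 \<le> k \<and> k \<le> 127 \<longrightarrow> Pfin k" by (rule down_step[OF _ pf_65]) (use all_66 in simp)
lemma all_64: "\<forall>k. 64 \<le> k \<and> k \<le> 127 \<longrightarrow> Pfin k" by (rule down_step[OF _ pf_64]) (use all_65 in simp)
lemma all_63: "\<forall>k. 63 \<le> k \<and> k \<le> 127 \<longrightarrow> Pfin k" by (rule down_step[OF _ pf_63]) (use all_64 in simp)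
lemma all_62: "\<forall>k. 62 \<le> k \<and> k \<le> 127 \<longrightarrow> Pfin k" by (rule down_step[OF _ pf_62]) (use all_63 in simp)
lemma all_61: "\<forall>k. 61 \<le> k \<and> k \<le> 127 \<longrightarrow> Pfin k" by (rule down_step[OF _ pf_61]) (use all_62 in simp)
lemma all_60: "\<forall>k. 60 \<le> k \<and> k \<le> 127 \<longrightarrow> Pfin k" by (rule down_step[OF _ pf_60]) (use all_61 in simp)
lemma all_59: "\<forall>k. 59 \<le> k \<and> k \<le> 127 \<longrightarrow> Pfin k" by (rule down_step[OF _ pf_59]) (use all_60 in simp)
lemma all_58: "\<forall>k. 58 \<le> k \<and> k \<le> 127 \<longrightarrow> Pfin k" by (rule down_step[OF _ pf_58]) (use all_59 in simp)
lemma all_57: "\<forall>k. 57 \<le> k \<and> k \<le> 127 \<longrightarrow> Pfin k" by (rule down_step[OF _ pf_57]) (use all_58 in simp)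
lemma all_56: "\<forall>k. 56 \<le> k \<and> k \<le> 127 \<longrightarrow> Pfin k" by (rule down_step[OF _ pf_56]) (use all_57 in simp)
lemma all_55: "\<forall>k. 55 \<le> k \<and> k \<le> 127 \<longrightarrow> Pfin k" by (rule down_step[OF _ pf_55]) (use all_56 in simp)
lemma all_54: "\<forall>k. 54 \<le> k \<and> k \<le> 127 \<longrightarrow> Pfin k" by (rule down_step[OF _ pf_54]) (use all_55 in simp)
lemma all_53: "\<forall>k. 53 \<le> k \<and> k \<le> 127 \<longrightarrow> Pfin k" by (rule down_step[OF _ pf_53]) (use all_54 in simp)
lemma all_52: "\<forall>k. 52 \<le> k \<and> k \<le> 127 \<longrightarrow> Pfin k" by (rule down_step[OF _ pf_52]) (use all_53 in simp)
lemma all_51: "\<forall>k. 51 \<le> k \<and> k \<le> 127 \<longrightarrow> Pfin k" by (rule down_step[OF _ pf_51]) (use all_52 in simp)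
lemma all_50: "\<forall>k. 50 \<le> k \<and> k \<le> 127 \<longrightarrow> Pfin k" by (rule down_step[OF _ pf_50]) (use all_51 in simp)
lemma all_49: "\<forall>k. 49 \<le> k \<and> k \<le> 127 \<longrightarrow> Pfin k" by (rule down_step[OF _ pf_49]) (use all_50 in simp)
lemma all_48: "\<forall>k. 48 \<le> k \<and> k \<le> 127 \<longrightarrow> Pfin k" by (rule down_step[OF _ pf_48]) (use all_49 in simp)
lemma all_47: "\<forall>k. 47 \<le> k \<and> k \<le> 127 \<longrightarrow> Pfin k" by (rule down_step[OF _ pf_47]) (use all_48 in simp)
lemma all_46: "\<forall>k. 46 \<le> k \<and> k \<le> 127 \<longrightarrow> Pfin k" by (rule down_step[OF _ pf_46]) (use all_47 in simp)
lemma all_45: "\<forall>k. 45 \<le> k \<and> k \<le> 127 \<longrightarrow> Pfin k" by (rule down_step[OF _ pf_45]) (use all_46 in simp)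
lemma all_44: "\<forall>k. 44 \<le> k \<and> k \<le> 127 \<longrightarrow> Pfin k" by (rule down_step[OF _ pf_44]) (use all_45 in simp)
lemma all_43: "\<forall>k. 43 \<le> k \<and> k \<le> 127 \<longrightarrow> Pfin k" by (rule down_step[OF _ pf_43]) (use all_44 in simp)
lemma all_42: "\<forall>k. 42 \<le> k \<and> k \<le> 127 \<longrightarrow> Pfin k" by (rule down_step[OF _ pf_42]) (use all_43 in simp)
lemma all_41: "\<forall>k. 41 \<le> k \<and> k \<le> 127 \<longrightarrow> Pfin k" by (rule down_step[OF _ pf_41]) (use all_42 in simp)
lemma all_40: "\<forall>k. 40 \<le> k \<and> k \<le> 127 \<longrightarrow> Pfin k" by (rule down_step[OF _ pf_40]) (use all_41 in simp)
lemma all_39: "\<forall>k. 39 \<le> k \<and> k \<le> 127 \<longrightarrow> Pfin k" by (rule down_step[OF _ pf_39]) (use all_40 in simp)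
lemma all_38: "\<forall>k. 38 \<le> k \<and> k \<le> 127 \<longrightarrow> Pfin k" by (rule down_step[OF _ pf_38]) (use all_39 in simp)
lemma all_37: "\<forall>k. 37 \<le> k \<and> k \<le> 127 \<longrightarrow> Pfin k" by (rule down_step[OF _ pf_37]) (use all_38 in simp)
lemma all_36: "\<forall>k. 36 \<le> k \<and> k \<le> 127 \<longrightarrow> Pfin k" by (rule down_step[OF _ pf_36]) (use all_37 in simp)
lemma all_35: "\<forall>k. 35 \<le> k \<and> k \<le> 127 \<longrightarrow> Pfin k" by (rule down_step[OF _ pf_35]) (use all_36 in simp)
lemma all_34: "\<forall>k. 34 \<le> k \<and> k \<le> 127 \<longrightarrow> Pfin k" by (rule down_step[OF _ pf_34]) (use all_35 in simp)
lemma all_33: "\<forall>k. 33 \<le> k \<and> k \<le> 127 \<longrightarrow> Pfin k" by (rule down_step[OF _ pf_33]) (use all_34 in simp)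
lemma all_32: "\<forall>k. 32 \<le> k \<and> k \<le> 127 \<longrightarrow> Pfin k" by (rule down_step[OF _ pf_32]) (use all_33 in simp)
lemma all_31: "\<forall>k. 31 \<le> k \<and> k \<le> 127 \<longrightarrow> Pfin k" by (rule down_step[OF _ pf_31]) (use all_32 in simp)
lemma all_30: "\<forall>k. 30 \<le> k \<and> k \<le> 127 \<longrightarrow> Pfin k" by (rule down_step[OF _ pf_30]) (use all_31 in simp)
lemma all_29: "\<forall>k. 29 \<le> k \<and> k \<le> 127 \<longrightarrow> Pfin k" by (rule down_step[OF _ pf_29]) (use all_30 in simp)
lemma all_28: "\<forall>k. 28 \<le> k \<and> k \<le> 127 \<longrightarrow> Pfin k" by (rule down_step[OF _ pf_28]) (use all_29 in simp)
lemma all_27: "\<forall>k. 27 \<le> k \<and> k \<le> 127 \<longrightarrow> Pfin k" by (rule down_step[OF _ pf_27]) (use all_28 in simp)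
lemma all_26: "\<forall>k. 26 \<le> k \<and> k \<le> 127 \<longrightarrow> Pfin k" by (rule down_step[OF _ pf_26]) (use all_27 in simp)
lemma all_25: "\<forall>k. 25 \<le> k \<and> k \<le> 127 \<longrightarrow> Pfin k" by (rule down_step[OF _ pf_25]) (use all_26 in simp)
lemma all_24: "\<forall>k. 24 \<le> k \<and> k \<le> 127 \<longrightarrow> Pfin k" by (rule down_step[OF _ pf_24]) (use all_25 in simp)
lemma all_23: "\<forall>k. 23 \<le> k \<and> k \<le> 127 \<longrightarrow> Pfin k" by (rule down_step[OF _ pf_23]) (use all_24 in simp)
lemma all_22: "\<forall>k. 22 \<le> k \<and> k \<le> 127 \<longrightarrow> Pfin k" by (rule down_step[OF _ pf_22]) (use all_23 in simp)
lemma all_21: "\<forall>k. 21 \<le> k \<and> k \<le> 127 \<longrightarrow> Pfin k" by (rule down_step[OF _ pf_21]) (use all_22 in simp)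
lemma all_20: "\<forall>k. 20 \<le> k \<and> k \<le> 127 \<longrightarrow> Pfin k" by (rule down_step[OF _ pf_20]) (use all_21 in simp)
lemma all_19: "\<forall>k. 19 \<le> k \<and> k \<le> 127 \<longrightarrow> Pfin k" by (rule down_step[OF _ pf_19]) (use all_20 in simp)
lemma all_18: "\<forall>k. 18 \<le> k \<and> k \<le> 127 \<longrightarrow> Pfin k" by (rule down_step[OF _ pf_18]) (use all_19 in simp)
lemma all_17: "\<forall>k. 17 \<le> k \<and> k \<le> 127 \<longrightarrow> Pfin k" by (rule down_step[OF _ pf_17]) (use all_18 in simp)
lemma all_16: "\<forall>k. 16 \<le> k \<and> k \<le> 127 \<longrightarrow> Pfin k" by (rule down_step[OF _ pf_16]) (use all_17 in simp)
lemma all_15: "\<forall>k. 15 \<le> k \<and> k \<le> 127 \<longrightarrow> Pfin k" by (rule down_step[OF _ pf_15]) (use all_16 in simp)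
lemma all_14: "\<forall>k. 14 \<le> k \<and> k \<le> 127 \<longrightarrow> Pfin k" by (rule down_step[OF _ pf_14]) (use all_15 in simp)
lemma all_13: "\<forall>k. 13 \<le> k \<and> k \<le> 127 \<longrightarrow> Pfin k" by (rule down_step[OF _ pf_13]) (use all_14 in simp)
lemma all_12: "\<forall>k. 12 \<le> k \<and> k \<le> 127 \<longrightarrow> Pfin k" by (rule down_step[OF _ pf_12]) (use all_13 in simp)
lemma all_11: "\<forall>k. 11 \<le> k \<and> k \<le> 127 \<longrightarrow> Pfin k" by (rule down_step[OF _ pf_11]) (use all_12 in simp)
lemma all_10: "\<forall>k. 10 \<le> k \<and> k \<le> 127 \<longrightarrow> Pfin k" by (rule down_step[OF _ pf_10]) (use all_11 in simp)
lemma all_9: "\<forall>k. 9 \<le> k \<and> k \<le> 127 \<longrightarrow> Pfin k" by (rule down_step[OF _ pf_9]) (use all_10 in simp)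
lemma all_8: "\<forall>k. 8 \<le> k \<and> k \<le> 127 \<longrightarrow> Pfin k" by (rule down_step[OF _ pf_8]) (use all_9 in simp)
lemma all_7: "\<forall>k. 7 \<le> k \<and> k \<le> 127 \<longrightarrow> Pfin k" by (rule down_step[OF _ pf_7]) (use all_8 in simp)
lemma all_6: "\<forall>k. 6 \<le> k \<and> k \<le> 127 \<longrightarrow> Pfin k" by (rule down_step[OF _ pf_6]) (use all_7 in simp)

lemma BOOT:
  assumes x: "x > 1"
  shows "f summable_on {n. real n > x}"
    and "infsum f {n. real n > x} * (x - 1) \<le> 1.97 + 1.97 * harm (nat \<lfloor>x\<rfloor>) / x"
proof -
  define H :: real where "H = harm (nat \<lfloor>x\<rfloor>)"
  have x0: "x > 0" using x by simp
  have H0: "H \<ge> 0" unfolding H_def by (rule harm_nonneg)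
  have key: "sum f F \<le> 1.97 / x + 1.97 * H / x ^ 2 + T3 (Max F) x / x"
    if F: "finite F" "F \<subseteq> {n. real n > x}" for F
  proof -
    have "sum f F \<le> T1 (Max F) / x + T2 (Max F) x / x ^ 2 + T3 (Max F) x / x"
      by (rule MB[OF x0 F]) (use F in simp)
    moreover have "T1 (Max F) / x \<le> 1.97 / x"
      using Abound[of "Max F"] x0 by (intro divide_right_mono) auto
    moreover have "T2 (Max F) x \<le> 1.97 * H"
    proof -
      have "T2 (Max F) x \<le> T1 (nat \<lfloor>x\<rfloor>) * H"
        using T2_le[OF x0, of "Max F"] W_bound[of "nat \<lfloor>x\<rfloor>"] unfolding H_def by linarith
      also have "\<dots> \<le> 1.97 * H" using Abound H0 by (intro mult_right_mono) auto
      finally show ?thesis .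
    qed
    hence "T2 (Max F) x / x ^ 2 \<le> 1.97 * H / x ^ 2"
      using x0 by (intro divide_right_mono) auto
    ultimately show ?thesis by linarith
  qed
  have bdd: "sum f F \<le> 2 * 1.97 / x + 1.97 * H / x ^ 2"
    if F: "finite F" "F \<subseteq> {n. real n > x}" for F
  proof -
    have "T3 (Max F) x / x \<le> 1.97 / x"
      using order.trans[OF T3_le_T1 Abound] x0 by (intro divide_right_mono) auto
    thus ?thesis using key[OF F] by simp
  qed
  show summ: "f summable_on {n. real n > x}"
  proof (rule nonneg_bdd_above_summable_on)
    show "bdd_above (sum f ` {F. F \<subseteq> {n. real n > x} \<and> finite F})"
      using bdd by (intro bdd_aboveI[where M = "2 * 1.97 / x + 1.97 * H / x ^ 2"]) auto
  qed (simp add: f_nonneg)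
  define I where "I = infsum f {n. real n > x}"
  have "I \<le> 1.97 / x + 1.97 * H / x ^ 2 + I / x"
    unfolding I_def
  proof (rule infsum_le_finite_sums[OF summ])
    fix F assume F: "finite F" "F \<subseteq> {n. real n > x}"
    have "T3 (Max F) x \<le> infsum f {n. real n > x}"
      unfolding T3_as_f
      by (rule finite_sum_le_infsum[OF summ]) (use T3_image_sub f_nonneg in auto)
    hence "T3 (Max F) x / x \<le> infsum f {n. real n > x} / x" using x0 by (intro divide_right_mono) auto
    thus "sum f F \<le> 1.97 / x + 1.97 * H / x ^ 2 + infsum f {n. real n > x} / x"
      using key[OF F] by linarith
  qed
  hence "I * x \<le> (1.97 / x + 1.97 * H / x ^ 2 + I / x) * x" using x0 by (intro mult_right_mono) auto
  also have "\<dots> = 1.97 + 1.97 * H / x + I" using x0 by (simp add: field_simps power2_eq_square)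
  finally show "infsum f {n. real n > x} * (x - 1) \<le> 1.97 + 1.97 * harm (nat \<lfloor>x\<rfloor>) / x"
    unfolding I_def H_def by (simp add: algebra_simps)
qed


lemma harm_lin:
  assumes "K \<ge> 128"
  shows "harm K \<le> (0.0425::real) * real K"
  using assms
proof (induction K rule: dec_induct)
  case base
  show ?case using harm_128b by simp
next
  case (step K)
  have "harm (Suc K) = harm K + 1 / (real K + 1)" by (simp add: harm_Suc divide_inverse add.commute)
  moreover have "1 / (real K + 1) \<le> (0.0425::real)"
  proof -
    have "real K + 1 \<ge> 129" using step by simp
    hence "1 / (real K + 1) \<le> 1 / 129" by (intro divide_left_mono) auto
    moreover have "(1::real) / 129 \<le> 0.0425" by simp
    ultimately show ?thesis by linarith
  qed
  ultimately show ?case using step.IH by simp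
qed

lemma I128: "infsum f {n. real n > 128} \<le> 0.01618"
proof -
  have "infsum f {n. real n > 128} * (128 - 1) \<le> 1.97 + 1.97 * harm (nat \<lfloor>128::real\<rfloor>) / 128"
    using BOOT(2)[of 128] by simp
  also have "nat \<lfloor>128::real\<rfloor> = 128" by simp
  also have "1.97 + 1.97 * harm 128 / 128 \<le> 1.97 + 1.97 * (5.44::real) / 128"
    using harm_128b by simp
  finally have "infsum f {n. real n > 128} * 127 \<le> 1.97 + 1.97 * (5.44::real) / 128" by simp
  thus ?thesis by simp
qed

theorem mainTheorem16:
  fixes x :: real
  assumes "x \<ge> 6"
  shows "(\<lambda>n::nat. 1 / (real n * real (totient n))) summable_on {n. real n > x}
         \<and> (\<Sum>\<^sub>\<infinity>n\<in>{n::nat. real n > x}. 1 / (real n * real (totient n))) < 2.1 / x"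
proof -
  have ff: "(\<lambda>n::nat. 1 / (real n * real (totient n))) = f" by (simp add: fun_eq_iff f_def)
  have x1: "x > 1" using assms by simp
  have summ: "f summable_on {n. real n > x}" by (rule BOOT(1)[OF x1])
  have bound: "infsum f {n. real n > x} < 2.1 / x"
  proof (cases "x \<ge> 128")
    case True
    define K where "K = nat \<lfloor>x\<rfloor>"
    have Kx: "real K \<le> x" unfolding K_def using assms by simp
    have K128: "K \<ge> 128" unfolding K_def using True by (simp add: le_nat_floor)
    have "harm K \<le> (0.0425::real) * real K" by (rule harm_lin[OF K128])
    also have "\<dots> \<le> 0.0425 * x" using Kx by simp
    finally have hK: "harm K / x \<le> 0.0425" using assms by (simp add: divide_le_eq)
    have "infsum f {n. real n > x} * (x - 1) \<le> 1.97 + 1.97 * harm K / x"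
      using BOOT(2)[OF x1] unfolding K_def .
    also have "\<dots> \<le> 1.97 + 1.97 * 0.0425" using hK by simp
    finally have I: "infsum f {n. real n > x} * (x - 1) \<le> 1.97 + 1.97 * 0.0425" .
    have "infsum f {n. real n > x} \<le> (1.97 + 1.97 * 0.0425) / (x - 1)"
      using I x1 by (subst pos_le_divide_eq) auto
    also have "\<dots> < 2.1 / x"
      using True by (simp add: field_simps)
    finally show ?thesis .
  next
    case False
    define k where "k = nat \<lfloor>x\<rfloor>"
    have fl: "real k \<le> x" "x < real k + 1" unfolding k_def using assms
      by (simp_all add: of_nat_nat real_of_int_floor_add_one_gt) 
    have k6: "6 \<le> k" unfolding k_def using assms by (simp add: le_nat_floor)
    have k127: "k \<le> 127" using fl False by simp
    have set_eq: "{n. real n > x} = {k<..128} \<union> {n. real n > 128}"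
    proof (rule equalityI; rule subsetI)
      fix n assume "n \<in> {n. real n > x}"
      hence "real n > real k" using fl by simp
      hence "n > k" by simp
      thus "n \<in> {k<..128} \<union> {n. real n > 128}" by auto
    next
      fix n assume n: "n \<in> {k<..128} \<union> {n. real n > 128}"
      show "n \<in> {n. real n > x}"
      proof (cases "n \<le> 128")
        case True
        hence "n \<ge> k + 1" using n by auto
        hence "real n \<ge> real k + 1" by simp
        thus ?thesis using fl by simp
      next
        case False
        thus ?thesis using \<open>\<not> 128 \<le> x\<close> by simp
      qed
    qed
    have disj: "{k<..128} \<inter> {n. real n > 128} = {}" by auto
    have "infsum f {n. real n > x} = infsum f {k<..128} + infsum f {n. real n > 128}"
      unfolding set_eq
      by (rule infsum_Un_disjoint[OF _ BOOT(1) disj]) auto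
    also have "infsum f {k<..128} = sum f {k<..128}" by simp
    finally have "infsum f {n. real n > x} \<le> sum f {k<..128} + 0.01618" using I128 by simp
    also have "\<dots> \<le> 2.1 / (real k + 1)" using all_6 k6 k127 unfolding Pfin_def by blast
    also have "\<dots> < 2.1 / x" using fl assms by (intro divide_strict_left_mono) auto
    finally show ?thesis .
  qed
  show ?thesis unfolding ff using summ bound by simp
qed

end
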